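(* Let $\Gamma$ be an oriented Jordan smooth curve and $\alpha:\Gamma\to\Gamma$ a homeomorphism with nonempty set $\Lambda$ of periodic points. (a) If $Y$ is finite, there is a finite decomposition $\Gamma=\big(\bigcup_i\overline{\omega_i}\big)\cup\big(\bigcup_j\overline{\gamma_j}\big)$, where $\omega_i\subset\Gamma\setminus\Phi$ and $\gamma_j\subset\Phi\setminus\Lambda$ are pairwise disjoint $\alpha_m$-invariant open arcs with endpoints in $Y$. (b) Let $f:\Gamma\to\mathbb R$ be continuous. If $Y$ is infinite and $f(\tau)>0$ for all $\tau\in Y'$, then there is a finite decomposition $\Gamma=\big(\bigcup_i\overline{\omega_i}\big)\cup\big(\bigcup_j\overline{\gamma_j}\big)\cup\big(\bigcup_k\overline{v_k}\big)$, where $\omega_i\subset\Gamma\setminus\Phi$, $\gamma_j\subset\Phi\setminus\Lambda$, $v_k\subset\Gamma$ are pairwise disjoint $\alpha_m$-invariant open arcs with endpoints in $Y$, $\overline{v_k}\cap Y'\ne\emptyset$, and $f(t)>0$ for all $t\in\overline{v_k}$ and all $k$.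
   Context: $\alpha_0=\mathrm{id}$, $\alpha_n=\alpha\circ\alpha_{n-1}$. A point $\tau$ is periodic of multiplicity $m$ if $\alpha_m(\tau)=\tau$ and $\alpha_j(\tau)\ne\tau$ for $1\le j<m$. If $\alpha$ preserves the orientation, all periodic points have a common multiplicity $m$; if $\alpha$ changes the orientation, set $m=2$. Then $\Lambda$ is the set of fixed points of $\alpha_m$. $\Phi=\overline{\{t\in\Gamma:\alpha_m(t)\ne t\}}$, $Y=\Lambda\cap\Phi$ (the boundary of $\Lambda$), $Y'$ the set of limit points of $Y$. *)

theory Defs
  imports "HOL-Analysis.Analysis"
begin

text \<open>An oriented smooth Jordan curve in the complex plane, given by a 1-periodic
  C1 parametrisation g with nowhere vanishing derivative, injective on [0,1).
  The orientation of the curve is the direction of increasing parameter.\<close>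
definition smooth_jordan_param :: "(real \<Rightarrow> complex) \<Rightarrow> bool" where
  "smooth_jordan_param g \<longleftrightarrow>
     (\<forall>t. g (t + 1) = g t) \<and>
     g C1_differentiable_on UNIV \<and>
     (\<forall>t. vector_derivative g (at t) \<noteq> 0) \<and>
     inj_on g {0..<1}"

definition curve :: "(real \<Rightarrow> complex) \<Rightarrow> complex set" where
  "curve g = g ` {0..<1}"

definition param :: "(real \<Rightarrow> complex) \<Rightarrow> complex \<Rightarrow> real" where
  "param g z = (THE s. s \<in> {0..<1} \<and> g s = z)"

definition pdist :: "(real \<Rightarrow> complex) \<Rightarrow> complex \<Rightarrow> complex \<Rightarrow> real" where
  "pdist g a t = frac (param g t - param g a)"

definition cyc :: "(real \<Rightarrow> complex) \<Rightarrow> complex \<Rightarrow> complex \<Rightarrow> complex \<Rightarrow> bool" where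
  "cyc g a b c \<longleftrightarrow> pdist g a b < pdist g a c"

definition preserves_orientation :: "(real \<Rightarrow> complex) \<Rightarrow> (complex \<Rightarrow> complex) \<Rightarrow> bool" where
  "preserves_orientation g \<alpha> \<longleftrightarrow>
     (\<forall>a\<in>curve g. \<forall>b\<in>curve g. \<forall>c\<in>curve g. a \<noteq> b \<and> b \<noteq> c \<and> a \<noteq> c \<longrightarrow>
        cyc g a b c \<longrightarrow> cyc g (\<alpha> a) (\<alpha> b) (\<alpha> c))"

text \<open>Open arc of the curve from a to b in the positive direction (both endpoints
  excluded); for a = b it is the curve with the point a removed.\<close>
definition open_arc :: "(real \<Rightarrow> complex) \<Rightarrow> complex \<Rightarrow> complex \<Rightarrow> complex set" where
  "open_arc g a b = {t \<in> curve g. 0 < pdist g a t \<and> (pdist g a t < pdist g a b \<or> a = b)}"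

definition is_periodic_point :: "complex set \<Rightarrow> (complex \<Rightarrow> complex) \<Rightarrow> complex \<Rightarrow> bool" where
  "is_periodic_point \<Gamma> \<alpha> \<tau> \<longleftrightarrow> \<tau> \<in> \<Gamma> \<and> (\<exists>n>0. (\<alpha> ^^ n) \<tau> = \<tau>)"

text \<open>The number m: the common multiplicity of periodic points (i.e. the least
  multiplicity) if \<alpha> preserves orientation, and 2 otherwise.\<close>
definition mult_m :: "(real \<Rightarrow> complex) \<Rightarrow> (complex \<Rightarrow> complex) \<Rightarrow> nat" where
  "mult_m g \<alpha> = (if preserves_orientation g \<alpha>
      then (LEAST n. n > 0 \<and> (\<exists>\<tau>\<in>curve g. (\<alpha> ^^ n) \<tau> = \<tau>)) else 2)"

definition Lam :: "(real \<Rightarrow> complex) \<Rightarrow> (complex \<Rightarrow> complex) \<Rightarrow> complex set" where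
  "Lam g \<alpha> = {t \<in> curve g. (\<alpha> ^^ mult_m g \<alpha>) t = t}"

definition Phi :: "(real \<Rightarrow> complex) \<Rightarrow> (complex \<Rightarrow> complex) \<Rightarrow> complex set" where
  "Phi g \<alpha> = closure {t \<in> curve g. (\<alpha> ^^ mult_m g \<alpha>) t \<noteq> t}"

definition Ybd :: "(real \<Rightarrow> complex) \<Rightarrow> (complex \<Rightarrow> complex) \<Rightarrow> complex set" where
  "Ybd g \<alpha> = Lam g \<alpha> \<inter> Phi g \<alpha>"

definition Ylim :: "(real \<Rightarrow> complex) \<Rightarrow> (complex \<Rightarrow> complex) \<Rightarrow> complex set" where
  "Ylim g \<alpha> = {x. x islimpt Ybd g \<alpha>}"

definition adm_arc :: "(real \<Rightarrow> complex) \<Rightarrow> (complex \<Rightarrow> complex) \<Rightarrow> complex set \<Rightarrow> bool" where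
  "adm_arc g \<alpha> A \<longleftrightarrow> (\<exists>a\<in>Ybd g \<alpha>. \<exists>b\<in>Ybd g \<alpha>. A = open_arc g a b) \<and>
      (\<alpha> ^^ mult_m g \<alpha>) ` A = A"

end

theory Submission
  imports Defs
begin


lemma frac_diff_frac: "frac (frac y - frac x) = frac (y - x)"
proof -
  have "frac (frac y - frac x) = frac (frac y - x)" by (rule frac_diff_simp)
  also have "frac y - x = (y - x) + of_int (- \<lfloor>y\<rfloor>)" by (simp add: frac_def)
  also have "frac ((y - x) + of_int (- \<lfloor>y\<rfloor>)) = frac (y - x)" by (rule frac_add_of_int_right)
  finally show ?thesis .
qed

context fixes g :: "real \<Rightarrow> complex" assumes sj: "smooth_jordan_param g"
begin

lemma g_cont: "continuous_on S g"
  using sj unfolding smooth_jordan_param_def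
  by (meson C1_differentiable_imp_continuous_on continuous_on_subset subset_UNIV)

lemma g_per1: "g (t + 1) = g t" using sj unfolding smooth_jordan_param_def by blast

lemma g_per_nat: "g (t + real n) = g t"
  by (induction n arbitrary: t) (auto simp: g_per1 add.assoc[symmetric])

lemma g_per_int: "g (t + of_int n) = g t"
proof (cases "n \<ge> 0")
  case True then show ?thesis using g_per_nat[of t "nat n"] by simp
next
  case False
  then show ?thesis using g_per_nat[of "t + of_int n" "nat (-n)"] by simp
qed

lemma g_frac: "g (frac t) = g t"
  using g_per_int[of t "- \<lfloor>t\<rfloor>"] by (simp add: frac_def)

lemma g_inj: "inj_on g {0..<1}" using sj unfolding smooth_jordan_param_def by blast

lemma g_eq_iff: "g x = g y \<longleftrightarrow> x - y \<in> \<int>"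
proof
  assume "g x = g y"
  then have "g (frac x) = g (frac y)" by (simp add: g_frac)
  then have "frac x = frac y" using g_inj by (auto simp: inj_on_def frac_lt_1)
  then have "frac (x - y) = 0" by (rule frac_diff_eq)
  then show "x - y \<in> \<int>" by simp
next
  assume "x - y \<in> \<int>"
  then obtain n where "x - y = of_int n" by (auto elim: Ints_cases)
  then have "x = y + of_int n" by simp
  then show "g x = g y" by (simp add: g_per_int)
qed

lemma curve_range: "curve g = range g"
proof -
  have "g x \<in> g ` {0..<1}" for x
    using g_frac[of x] frac_ge_0[of x] frac_lt_1[of x] by (metis atLeastLessThan_iff image_eqI)
  then show ?thesis unfolding curve_def by auto
qed

lemma curve_01: "curve g = g ` {0..1}"
proof -
  have "g x \<in> g ` {0..1}" for x
    using g_frac[of x] frac_ge_0[of x] frac_lt_1[of x] by (metis atLeastAtMost_iff image_eqI less_imp_le)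
  then show ?thesis unfolding curve_range by auto
qed

lemma compact_curve: "compact (curve g)"
  unfolding curve_01 by (intro compact_continuous_image g_cont compact_Icc)

lemma closed_curve: "closed (curve g)" by (simp add: compact_curve compact_imp_closed)

lemma connected_curve: "connected (curve g)"
  unfolding curve_01 by (intro connected_continuous_image g_cont connected_Icc)

lemma param_g: "param g (g u) = frac u"
  unfolding param_def
proof (rule the_equality)
  show "frac u \<in> {0..<1} \<and> g (frac u) = g u" by (simp add: g_frac frac_lt_1)
  fix s assume "s \<in> {0..<1} \<and> g s = g u"
  then show "s = frac u" using g_inj g_frac[of u] by (auto simp: inj_on_def frac_lt_1)
qed

lemma g_param: "z \<in> curve g \<Longrightarrow> g (param g z) = z"
  unfolding curve_range using param_g g_frac by auto

lemma pdist_g: "pdist g (g x) (g y) = frac (y - x)"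
  unfolding pdist_def param_g by (rule frac_diff_frac)

end


definition goodI :: "real set \<Rightarrow> (real \<Rightarrow> real) \<Rightarrow> real \<Rightarrow> real \<Rightarrow> bool" where
  "goodI S F a b \<longleftrightarrow> a < b \<and> (S \<inter> {a<..<b} = {} \<or> ((\<forall>s\<in>{a..b}. F s > 0) \<and> (\<exists>s\<in>{a..b}. s islimpt S)))"

definition chainI :: "real set \<Rightarrow> (real \<Rightarrow> real) \<Rightarrow> real list \<Rightarrow> bool" where
  "chainI S F ps \<longleftrightarrow> ps \<noteq> [] \<and> sorted_wrt (<) ps \<and> set ps \<subseteq> S \<and>
     (\<forall>i. Suc i < length ps \<longrightarrow> goodI S F (ps!i) (ps!Suc i))"

lemma sorted_le_last: "sorted_wrt (<) (ps::real list) \<Longrightarrow> a \<in> set ps \<Longrightarrow> a \<le> last ps"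
proof (induction ps rule: rev_induct)
  case Nil then show ?case by simp
next
  case (snoc x xs) then show ?case by (auto simp: sorted_wrt_append)
qed

lemma chain_ext:
  assumes "chainI S F ps" "y \<in> S" "goodI S F (last ps) y"
  shows "chainI S F (ps @ [y])"
proof -
  have ne: "ps \<noteq> []" and so: "sorted_wrt (<) ps" and sub: "set ps \<subseteq> S"
    and gd: "\<And>i. Suc i < length ps \<Longrightarrow> goodI S F (ps!i) (ps!Suc i)"
    using assms(1) unfolding chainI_def by auto
  have lt: "last ps < y" using assms(3) unfolding goodI_def by auto
  have "sorted_wrt (<) (ps @ [y])"
    using so sorted_le_last[OF so] lt by (force simp: sorted_wrt_append)
  moreover have "goodI S F ((ps @ [y])!i) ((ps @ [y])!Suc i)" if "Suc i < length (ps @ [y])" for i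
  proof (cases "Suc i < length ps")
    case True then show ?thesis using gd[OF True] by (simp add: nth_append)
  next
    case False
    then have "i = length ps - 1" "Suc i = length ps" using that by auto
    then show ?thesis using assms(3) ne by (simp add: nth_append last_conv_nth)
  qed
  ultimately show ?thesis using ne sub assms(2) unfolding chainI_def by auto
qed

lemma pos_near:
  fixes F :: "real \<Rightarrow> real"
  assumes "continuous_on {0..1} F" "s \<in> {0..1}" "F s > 0"
  obtains d where "d > 0" "\<And>t. t \<in> {0..1} \<Longrightarrow> \<bar>t - s\<bar> < d \<Longrightarrow> F t > 0"
proof -
  obtain d where d: "d > 0" "\<forall>t\<in>{0..1}. dist t s < d \<longrightarrow> dist (F t) (F s) < F s"
    using assms unfolding continuous_on_iff by blast
  show ?thesis
  proof (rule that[OF d(1)])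
    fix t assume "t \<in> {0..1}" "\<bar>t - s\<bar> < d"
    then have "dist (F t) (F s) < F s" using d(2) by (simp add: dist_real_def)
    then show "F t > 0" by (simp add: dist_real_def abs_less_iff)
  qed
qed

lemma chain_exists:
  assumes clS: "closed S" and Ssub: "S \<subseteq> {0..1}" and S0: "0 \<in> S" and S1: "1 \<in> S"
    and Fc: "continuous_on {0..1} F" and Fpos: "\<forall>s\<in>{0..1}. s islimpt S \<longrightarrow> F s > 0"
  shows "\<exists>ps. chainI S F ps \<and> hd ps = 0 \<and> last ps = 1"
proof -
  define R where "R = {x. \<exists>ps. chainI S F ps \<and> hd ps = 0 \<and> last ps = x}"
  have RS: "R \<subseteq> S"
  proof
    fix x assume "x \<in> R"
    then obtain ps where "chainI S F ps" "last ps = x" unfolding R_def by auto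
    then show "x \<in> S" unfolding chainI_def using last_in_set by blast
  qed
  have R0: "0 \<in> R" unfolding R_def chainI_def using S0 by (intro CollectI exI[of _ "[0]"]) auto
  have Rext: "y \<in> R" if xR: "x \<in> R" and "y \<in> S" "goodI S F x y" for x y
  proof -
    obtain ps where ps: "chainI S F ps" "hd ps = 0" "last ps = x" using xR unfolding R_def mem_Collect_eq by blast
    have ne: "ps \<noteq> []" using ps unfolding chainI_def by auto
    have "chainI S F (ps @ [y])" using chain_ext[OF ps(1) that(2)] ps(3) that(3) by simp
    then show ?thesis unfolding R_def using ps ne by (intro CollectI exI[of _ "ps @ [y]"]) auto
  qed
  have bdd: "bdd_above R" using RS Ssub by (intro bdd_aboveI[of _ 1]) auto
  define z where "z = Sup R"
  have upper: "x \<le> z" if "x \<in> R" for x using cSup_upper[OF that bdd] z_def by simp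
  have z0: "0 \<le> z" using upper R0 by simp
  have z1: "z \<le> 1" unfolding z_def using R0 RS Ssub by (intro cSup_least) auto
  have zR: "z \<in> R"
  proof (rule ccontr)
    assume nz: "z \<notin> R"
    have approx: "\<exists>x\<in>R. z - e < x \<and> x < z" if "e > 0" for e
    proof -
      have "z - e < Sup R" using that z_def by simp
      then obtain x where "x \<in> R" "z - e < x" using less_cSup_iff[OF _ bdd] R0 by blast
      then show ?thesis using upper nz by (metis order_le_less)
    qed
    have zl: "z islimpt S"
      unfolding islimpt_approachable
    proof (intro allI impI)
      fix e :: real assume "e > 0"
      then obtain x where "x \<in> R" "z - e < x" "x < z" using approx by blast
      then show "\<exists>x'\<in>S. x' \<noteq> z \<and> dist x' z < e" using RS by (intro bexI[of _ x]) (auto simp: dist_real_def)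
    qed
    have zS: "z \<in> S" using zl clS closed_limpt by blast
    have "F z > 0" using Fpos zl z0 z1 by auto
    then obtain d where d: "d > 0" "\<And>t. t \<in> {0..1} \<Longrightarrow> \<bar>t - z\<bar> < d \<Longrightarrow> F t > 0"
      using pos_near[OF Fc] z0 z1 by auto
    obtain x where x: "x \<in> R" "z - d < x" "x < z" using approx d(1) by blast
    have x0: "0 \<le> x" using x(1) RS Ssub by auto
    have "goodI S F x z" unfolding goodI_def
      using x x0 z1 zl by (auto intro!: d(2) bexI[of _ z])
    then have "z \<in> R" using Rext[OF x(1) zS] by simp
    then show False using nz by simp
  qed
  have "z = 1"
  proof (rule ccontr)
    assume "z \<noteq> 1"
    then have zlt: "z < 1" using z1 by simp
    have zS: "z \<in> S" using zR RS by auto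
    show False
    proof (cases "\<exists>e>0. S \<inter> {z<..<z+e} = {}")
      case True
      then obtain e where e: "e > 0" "S \<inter> {z<..<z+e} = {}" by blast
      define e' where "e' = min e (1 - z)"
      have e': "e' > 0" "z + e' \<le> 1" "S \<inter> {z<..<z+e'} = {}"
      proof -
        show "e' > 0" using e zlt unfolding e'_def by simp
        show "z + e' \<le> 1" unfolding e'_def by simp
        have le: "e' \<le> e" unfolding e'_def by simp
        show "S \<inter> {z<..<z+e'} = {}"
        proof (rule equals0I)
          fix t assume "t \<in> S \<inter> {z<..<z+e'}"
          then have "t \<in> S \<inter> {z<..<z+e}" using le by auto
          then show False using e(2) by simp
        qed
      qed
      define T where "T = S \<inter> {z+e'..1}"
      have Tne: "T \<noteq> {}" using S1 e'(1,2) unfolding T_def by auto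
      have Tcl: "closed T" unfolding T_def using clS by (intro closed_Int) auto
      have Tbdd: "bdd_below T" unfolding T_def by (intro bdd_belowI[of _ "z+e'"]) auto
      define s0 where "s0 = Inf T"
      have s0T: "s0 \<in> T" unfolding s0_def using closed_contains_Inf[OF Tne Tbdd Tcl] .
      have gap: "S \<inter> {z<..<s0} = {}"
      proof (rule ccontr)
        assume "S \<inter> {z<..<s0} \<noteq> {}"
        then obtain t where t: "t \<in> S" "z < t" "t < s0" by auto
        show False
        proof (cases "t < z + e'")
          case True
          then have "t \<in> S \<inter> {z<..<z+e'}" using t by simp
          then show False using e'(3) by (metis empty_iff)
        next
          case False
          then have "t \<in> T" unfolding T_def using t Ssub by auto
          then have "s0 \<le> t" unfolding s0_def using cInf_lower[OF _ Tbdd] by simp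
          then show False using t by simp
        qed
      qed
      have "z < s0" using s0T e'(1,2) unfolding T_def by auto
      then have "goodI S F z s0" unfolding goodI_def using gap by auto
      then have "s0 \<in> R" using Rext[OF zR] s0T unfolding T_def by auto
      then show False using upper \<open>z < s0\<close> by fastforce
    next
      case False
      have nb: "\<exists>t\<in>S. z < t \<and> t < z + e" if "e > 0" for e
      proof -
        have "S \<inter> {z<..<z+e} \<noteq> {}" using False that by auto
        then obtain t where "t \<in> S \<inter> {z<..<z+e}" by (metis ex_in_conv)
        then show ?thesis by auto
      qed
      have zl: "z islimpt S"
        unfolding islimpt_approachable
      proof (intro allI impI)
        fix e :: real assume "e > 0"
        then obtain t where "t \<in> S" "z < t" "t < z + e" using nb by blast
        then show "\<exists>x'\<in>S. x' \<noteq> z \<and> dist x' z < e" by (intro bexI[of _ t]) (auto simp: dist_real_def)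
      qed
      have "F z > 0" using Fpos zl z0 z1 by auto
      then obtain d where d: "d > 0" "\<And>t. t \<in> {0..1} \<Longrightarrow> \<bar>t - z\<bar> < d \<Longrightarrow> F t > 0"
        using pos_near[OF Fc] z0 z1 by auto
      obtain t where t: "t \<in> S" "z < t" "t < z + d" using nb d(1) by blast
      have t1: "t \<le> 1" using t Ssub by auto
      have "goodI S F z t" unfolding goodI_def
        using t t1 z0 zl by (auto intro!: d(2) bexI[of _ z])
      then have "t \<in> R" using Rext[OF zR t(1)] by simp
      then show False using upper t by fastforce
    qed
  qed
  then show ?thesis using zR unfolding R_def by auto
qed


context fixes g :: "real \<Rightarrow> complex" assumes sj: "smooth_jordan_param g"
begin

lemma phi_cont: "continuous_on S (\<lambda>s. g (q + s))"
  by (rule continuous_on_subset[of UNIV]) (intro continuous_on_compose2[OF g_cont[OF sj, of UNIV]] continuous_intros, auto)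

lemma phi_eq_iff: "g (q + s) = g (q + s') \<longleftrightarrow> s - s' \<in> \<int>"
  using g_eq_iff[OF sj, of "q+s" "q+s'"] by simp

lemma phi_01: "(\<lambda>s. g (q + s)) ` {0..1} = curve g"
proof
  show "(\<lambda>s. g (q + s)) ` {0..1} \<subseteq> curve g" using curve_range[OF sj] by auto
  show "curve g \<subseteq> (\<lambda>s. g (q + s)) ` {0..1}"
  proof
    fix t assume "t \<in> curve g"
    then obtain u where u: "t = g u" using curve_range[OF sj] by auto
    have "g (q + frac (u - q)) = g u"
      using phi_eq_iff[of q "frac (u - q)" "u - q"] g_eq_iff[OF sj]
      by (metis add_diff_cancel_left' add.commute diff_add_cancel frac_def Ints_of_int diff_diff_eq2 minus_diff_eq Ints_minus)
    moreover have "frac (u - q) \<in> {0..1}" using frac_lt_1[of "u-q"] by auto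
    ultimately show "t \<in> (\<lambda>s. g (q + s)) ` {0..1}" using u by (metis image_eqI)
  qed
qed

lemma arc_param:
  assumes "0 \<le> x" "x < y" "y \<le> 1"
  shows "open_arc g (g (q + x)) (g (q + y)) = (\<lambda>s. g (q + s)) ` {x<..<y}"
proof
  have pd: "pdist g (g (q + x)) (g u) = frac (u - (q + x))" for u by (rule pdist_g[OF sj])
  show "(\<lambda>s. g (q + s)) ` {x<..<y} \<subseteq> open_arc g (g (q + x)) (g (q + y))"
  proof
    fix t assume "t \<in> (\<lambda>s. g (q + s)) ` {x<..<y}"
    then obtain s where s: "x < s" "s < y" "t = g (q + s)" by auto
    have fr: "frac (q + s - (q + x)) = s - x" using s assms by (simp add: frac_eq)
    have "pdist g (g (q + x)) t = s - x" using pd fr s(3) by simp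
    moreover have "s - x < pdist g (g (q + x)) (g (q + y)) \<or> g (q + x) = g (q + y)"
    proof (cases "y - x < 1")
      case True
      then have "frac (q + y - (q + x)) = y - x" using assms by (simp add: frac_eq)
      then show ?thesis using pd s by auto
    next
      case False
      then have "y = x + 1" using assms by simp
      then show ?thesis using g_per1[OF sj, of "q+x"] by (simp add: add.assoc)
    qed
    moreover have "t \<in> curve g" using s(3) curve_range[OF sj] by auto
    ultimately show "t \<in> open_arc g (g (q + x)) (g (q + y))" unfolding open_arc_def using s by auto
  qed
  show "open_arc g (g (q + x)) (g (q + y)) \<subseteq> (\<lambda>s. g (q + s)) ` {x<..<y}"
  proof
    fix t assume t: "t \<in> open_arc g (g (q + x)) (g (q + y))"
    then have tc: "t \<in> curve g" unfolding open_arc_def by auto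
    then obtain u where u: "t = g u" using curve_range[OF sj] by auto
    define r where "r = frac (u - (q + x))"
    have r0: "0 < r" and rc: "r < pdist g (g (q + x)) (g (q + y)) \<or> g (q + x) = g (q + y)"
      using t u pd unfolding open_arc_def r_def by auto
    have r1: "r < 1" unfolding r_def by (rule frac_lt_1)
    have ry: "r < y - x"
    proof (cases "y - x < 1")
      case True
      have "frac (q + y - (q + x)) = y - x" using assms True by (simp add: frac_eq)
      moreover have "g (q + x) \<noteq> g (q + y)"
      proof
        assume "g (q + x) = g (q + y)"
        then have "x - y \<in> \<int>" using phi_eq_iff by blast
        then obtain n where n: "x - y = of_int n" by (auto elim: Ints_cases)
        then have "n < 0" "n > -1" using assms True by linarith+
        then show False by simp
      qed
      ultimately show ?thesis using rc pd by auto
    next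
      case False then show ?thesis using r1 assms by simp
    qed
    have "g (q + (x + r)) = g u"
    proof -
      have "(q + (x + r)) - u = - of_int \<lfloor>u - (q + x)\<rfloor>" unfolding r_def frac_def by simp
      then show ?thesis using g_eq_iff[OF sj] by (metis Ints_minus Ints_of_int)
    qed
    then show "t \<in> (\<lambda>s. g (q + s)) ` {x<..<y}" using u r0 ry by (intro image_eqI[of _ _ "x + r"]) auto
  qed
qed

lemma closure_arc:
  assumes "x < y"
  shows "closure ((\<lambda>s. g (q + s)) ` {x<..<y}) = (\<lambda>s. g (q + s)) ` {x..y}"
proof
  have "compact ((\<lambda>s. g (q + s)) ` {x..y})" by (intro compact_continuous_image phi_cont compact_Icc)
  then show "closure ((\<lambda>s. g (q + s)) ` {x<..<y}) \<subseteq> (\<lambda>s. g (q + s)) ` {x..y}"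
  proof -
    have "(\<lambda>s. g (q + s)) ` {x<..<y} \<subseteq> (\<lambda>s. g (q + s)) ` {x..y}" by (rule image_mono) auto
    then show ?thesis using closure_minimal compact_imp_closed \<open>compact _\<close> by blast
  qed
  have "(\<lambda>s. g (q + s)) ` closure {x<..<y} \<subseteq> closure ((\<lambda>s. g (q + s)) ` {x<..<y})"
    by (intro image_closure_subset phi_cont closed_closure closure_subset)
  then show "(\<lambda>s. g (q + s)) ` {x..y} \<subseteq> closure ((\<lambda>s. g (q + s)) ` {x<..<y})"
    using assms by simp
qed

end


definition ee :: "real \<Rightarrow> complex" where "ee x = exp (2 * of_real pi * \<i> * of_real x)"

lemma ee_eq: "ee x = ee y \<longleftrightarrow> x - y \<in> \<int>"
proof
  assume "ee x = ee y"
  then obtain n :: int where n: "2 * of_real pi * \<i> * of_real x = 2 * of_real pi * \<i> * of_real y + (of_int (2 * n) * pi) * \<i>"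
    unfolding ee_def exp_eq by blast
  have "Im (2 * of_real pi * \<i> * of_real x) = Im (2 * of_real pi * \<i> * of_real y + (of_int (2 * n) * pi) * \<i>)"
    using n by simp
  then have "2 * pi * x = 2 * pi * y + 2 * of_int n * pi" by simp
  then have "pi * (2 * x) = pi * (2 * (y + of_int n))" by (simp add: algebra_simps)
  then have "x = y + of_int n" using pi_gt_zero by simp
  then show "x - y \<in> \<int>" by simp
next
  assume "x - y \<in> \<int>"
  then obtain n where n: "x = y + of_int n" by (metis Ints_cases add_diff_cancel_left' diff_add_cancel add.commute)
  have "2 * of_real pi * \<i> * of_real x = 2 * of_real pi * \<i> * of_real y + (of_int (2 * n) * pi) * \<i>"
    unfolding n by (simp add: algebra_simps)
  then show "ee x = ee y" unfolding ee_def exp_eq by blast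
qed

lemma norm_ee: "norm (ee x) = 1" unfolding ee_def by simp

lemma ee_cont: "continuous_on S ee" unfolding ee_def by (intro continuous_intros)

context fixes g :: "real \<Rightarrow> complex" assumes sj: "smooth_jordan_param g"
begin

definition E :: "complex \<Rightarrow> complex" where "E z = ee (param g z)"

lemma E_g: "E (g u) = ee u"
  unfolding E_def param_g[OF sj] ee_eq by (simp add: frac_def)

lemma param_in: "z \<in> curve g \<Longrightarrow> param g z \<in> {0..<1}"
  using curve_range[OF sj] param_g[OF sj] frac_lt_1 by auto

lemma E_inj: "z \<in> curve g \<Longrightarrow> w \<in> curve g \<Longrightarrow> E z = E w \<Longrightarrow> z = w"
  using curve_range[OF sj] E_g g_eq_iff[OF sj] ee_eq by auto

lemma E_cont: "continuous_on (curve g) E"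
proof (rule continuous_from_closed_graph[of "sphere 0 1"])
  show "compact (sphere (0::complex) 1)" by simp
  show "E \<in> curve g \<rightarrow> sphere 0 1" using norm_ee unfolding E_def by auto
  have "(\<lambda>x. (x, E x)) ` curve g = (\<lambda>s. (g s, ee s)) ` {0..1}"
  proof
    show "(\<lambda>x. (x, E x)) ` curve g \<subseteq> (\<lambda>s. (g s, ee s)) ` {0..1}"
    proof
      fix p assume "p \<in> (\<lambda>x. (x, E x)) ` curve g"
      then obtain z where z: "z \<in> curve g" "p = (z, E z)" by auto
      have "p = (g (param g z), ee (param g z))" using z g_param[OF sj] unfolding E_def by simp
      then show "p \<in> (\<lambda>s. (g s, ee s)) ` {0..1}" using param_in[OF z(1)] by auto
    qed
    show "(\<lambda>s. (g s, ee s)) ` {0..1} \<subseteq> (\<lambda>x. (x, E x)) ` curve g"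
      using E_g curve_range[OF sj] by auto
  qed
  moreover have "compact ((\<lambda>s. (g s, ee s)) ` {0..1})"
    by (intro compact_continuous_image continuous_on_Pair g_cont[OF sj] ee_cont) auto
  ultimately show "closed ((\<lambda>x. (x, E x)) ` curve g)" by (simp add: compact_imp_closed)
qed

end


lemma no_loop:
  fixes G :: "real \<Rightarrow> real"
  assumes c: "continuous_on {0..1} G" and e: "G 0 = G 1" and l: "G 0 < G (1/2)"
  shows "\<exists>a b. 0 < a \<and> a < b \<and> b \<le> 1 \<and> G a = G b"
proof -
  define v where "v = (G 0 + G (1/2)) / 2"
  obtain a where a: "0 \<le> a" "a \<le> 1/2" "G a = v"
    using IVT'[of G 0 v "1/2"] continuous_on_subset[OF c] l unfolding v_def by fastforce
  obtain b where b: "1/2 \<le> b" "b \<le> 1" "G b = v"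
    using IVT2'[of G 1 v "1/2"] continuous_on_subset[OF c] l e unfolding v_def by fastforce
  have "a \<noteq> 1/2"
  proof
    assume h: "a = 1/2"
    have "G (1/2) = v" using a(3)[unfolded h] .
    then show False using l unfolding v_def by simp
  qed
  then have "a < b" using a b by linarith
  moreover have "a \<noteq> 0" using a l unfolding v_def by auto
  ultimately show ?thesis using a b by (intro exI[of _ a] exI[of _ b]) auto
qed

lemma frac_shift:
  fixes x :: real
  assumes "-1 \<le> x" "x < 0" shows "frac x = x + 1"
proof -
  have "frac x = frac (x + 1)" by (simp add: frac_1_eq)
  also have "\<dots> = x + 1" using assms by (simp add: frac_eq)
  finally show ?thesis .
qed

lemma frac_cases:
  fixes x p :: real
  assumes "x \<in> {0..<1}" "p \<in> {0..<1}" "x \<noteq> p"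
  shows "frac (x - p) = (if p < x then x - p else x - p + 1)"
  using assms frac_shift[of "x - p"] by (auto simp: frac_eq)

lemma mono_frac:
  fixes F :: "real \<Rightarrow> real"
  assumes mono: "\<And>x y. x \<in> {0..1} \<Longrightarrow> y \<in> {0..1} \<Longrightarrow> x < y \<Longrightarrow> F x < F y"
    and F1: "F 1 = F 0 + 1"
    and abc: "pa \<in> {0..<1}" "pb \<in> {0..<1}" "pc \<in> {0..<1}" "pb \<noteq> pa" "pc \<noteq> pa"
    and lt: "frac (pb - pa) < frac (pc - pa)"
  shows "frac (F pb - F pa) < frac (F pc - F pa)"
proof -
  have Fc: "frac (F x - F pa) = (if pa < x then F x - F pa else F x - F pa + 1)"
    if "x \<in> {0..<1}" "x \<noteq> pa" for x
  proof (cases "pa < x")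
    case True
    have "F x < F 1" "F 0 \<le> F pa" "F pa < F x"
      using mono[of x 1] mono[of 0 pa] mono[of pa x] that abc True by (auto simp: order_le_less)
    then have "F x - F pa \<in> {0..<1}" using F1 by auto
    then show ?thesis using True by simp
  next
    case False
    then have "x < pa" using that by simp
    then have "F pa < F 1" "F 0 \<le> F x" "F x < F pa"
      using mono[of pa 1] mono[of 0 x] mono[of x pa] that abc by (auto simp: order_le_less)
    then have "frac (F x - F pa) = F x - F pa + 1" using F1 by (intro frac_shift) auto
    then show ?thesis using False by simp
  qed
  have m: "F x < F y \<longleftrightarrow> x < y" if "x \<in> {0..1}" "y \<in> {0..1}" for x y
    using mono[of x y] mono[of y x] that by (cases x y rule: linorder_cases) auto
  have "F 0 \<le> F pa" "F pa < F 0 + 1" "F 0 \<le> F pb" "F pb < F 0 + 1" "F 0 \<le> F pc" "F pc < F 0 + 1"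
    using mono[of 0 pa] mono[of pa 1] mono[of 0 pb] mono[of pb 1] mono[of 0 pc] mono[of pc 1] abc F1
    by (auto simp: order_le_less)
  moreover have "F pb < F pc \<longleftrightarrow> pb < pc" "F pa < F pb \<longleftrightarrow> pa < pb" "F pa < F pc \<longleftrightarrow> pa < pc"
    using m abc by auto
  moreover note frac_cases[OF abc(2,1,4)] frac_cases[OF abc(3,1,5)] Fc[OF abc(2,4)] Fc[OF abc(3,5)]
  ultimately show ?thesis using lt abc by (auto split: if_splits)
qed

context fixes g :: "real \<Rightarrow> complex" and \<alpha> \<beta> :: "complex \<Rightarrow> complex"
  assumes sj: "smooth_jordan_param g" and hom: "homeomorphism (curve g) (curve g) \<alpha> \<beta>"
begin

lemma al_im: "\<alpha> ` curve g = curve g" using hom unfolding homeomorphism_def by auto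
lemma al_inj: "inj_on \<alpha> (curve g)" using hom unfolding homeomorphism_def by (metis inj_on_inverseI)
lemma al_cont: "continuous_on (curve g) \<alpha>" using hom unfolding homeomorphism_def by auto

lemma lift: "\<exists>F. continuous_on UNIV F \<and> (\<forall>s. g (F s) = \<alpha> (g s))"
proof -
  define w where "w s = E g (\<alpha> (g s))" for s
  have gc: "g s \<in> curve g" for s using curve_range[OF sj] by auto
  have agc: "\<alpha> (g s) \<in> curve g" for s using gc al_im by auto
  have "continuous_on UNIV (\<alpha> \<circ> g)"
    using continuous_on_compose[OF g_cont[OF sj, of UNIV]] continuous_on_subset[OF al_cont] gc by blast
  then have wc: "continuous_on UNIV w" unfolding w_def
    using continuous_on_compose[of UNIV "\<alpha> \<circ> g" "E g"] continuous_on_subset[OF E_cont[OF sj]] agc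
    by (auto simp: comp_def image_subset_iff)
  have wn: "w s \<noteq> 0" for s unfolding w_def E_def[OF sj] using norm_ee by (metis norm_zero zero_neq_one)
  obtain L where L: "continuous_on UNIV L" "\<And>s. w s = exp (L s)"
    using continuous_logarithm_on_contractible[OF wc contractible_UNIV wn] by auto
  define F where "F s = Im (L s) / (2 * pi)" for s
  have Fc: "continuous_on UNIV F" unfolding F_def by (intro continuous_intros L(1)) auto
  have "g (F s) = \<alpha> (g s)" for s
  proof -
    have "norm (w s) = 1" unfolding w_def E_def[OF sj] by (rule norm_ee)
    then have "Re (L s) = 0" using L(2)[of s] by simp
    then have "L s = 2 * of_real pi * \<i> * of_real (F s)"
      unfolding F_def by (simp add: complex_eq_iff)
    then have "E g (g (F s)) = w s" using L(2) E_g[OF sj] unfolding ee_def by simp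
    then show ?thesis using E_inj[OF sj gc agc] unfolding w_def by simp
  qed
  then show ?thesis using Fc by blast
qed

lemma dichotomy: "preserves_orientation g \<alpha> \<or> (\<exists>t\<in>curve g. \<alpha> t = t)"
proof -
  obtain F where Fc: "continuous_on UNIV F" and Fg: "\<And>s. g (F s) = \<alpha> (g s)" using lift by blast
  have gc: "g s \<in> curve g" for s using curve_range[OF sj] by auto
  have J: "x - y \<in> \<int>" if "F x - F y \<in> \<int>" for x y
  proof -
    have "g (F x) = g (F y)" using that g_eq_iff[OF sj] by blast
    then have "\<alpha> (g x) = \<alpha> (g y)" using Fg by simp
    then have "g x = g y" using al_inj gc by (meson inj_onD)
    then show ?thesis using g_eq_iff[OF sj] by blast
  qed
  have "g (F 1) = g (F 0)" using Fg g_per1[OF sj, of 0] by simp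
  then have "F 1 - F 0 \<in> \<int>" using g_eq_iff[OF sj] by blast
  then obtain n :: int where n: "F 1 = F 0 + of_int n" by (metis Ints_cases add_diff_cancel_left' diff_add_cancel add.commute)
  have c01: "continuous_on {0..1} F" using Fc continuous_on_subset by blast
  have int01: "s = 0 \<or> s = 1" if s01: "s \<in> {0..1}" and sI: "s \<in> \<int>" for s :: real
  proof -
    obtain m :: int where "s = of_int m" using sI by (auto elim: Ints_cases)
    moreover have "0 \<le> m" "m \<le> 1" using s01 calculation by auto
    ultimately show ?thesis by (cases "m = 0") auto
  qed
  consider "n = 0" | "n \<ge> 2" | "n \<le> -2" | "n = -1" | "n = 1" by linarith
  then show ?thesis
  proof cases
    case 1
    have h: "F (1/2) \<noteq> F 0"
    proof
      assume "F (1/2) = F 0"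
      then have "(1/2::real) - 0 \<in> \<int>" using J[of "1/2" 0] by simp
      then show False using int01[of "1/2"] by auto
    qed
    have "\<exists>a b. 0 < a \<and> a < b \<and> b \<le> 1 \<and> F a = F b"
    proof (cases "F 0 < F (1/2)")
      case True then show ?thesis using no_loop[OF c01] n 1 by simp
    next
      case False
      then have "(\<lambda>x. - F x) 0 < (\<lambda>x. - F x) (1/2)" using h by simp
      moreover have "continuous_on {0..1} (\<lambda>x. - F x)" using c01 by (intro continuous_intros)
      ultimately show ?thesis using no_loop[of "\<lambda>x. - F x"] n 1 by simp
    qed
    then obtain a b where ab: "0 < a" "a < b" "b \<le> 1" "F a = F b" by blast
    then have "b - a \<in> \<int>" using J[of b a] by simp
    moreover have "b - a \<in> {0..1}" using ab by simp
    ultimately show ?thesis using int01[of "b - a"] ab by auto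
  next
    case 2
    then obtain s where s: "0 \<le> s" "s \<le> 1" "F s = F 0 + 1"
      using IVT'[of F 0 "F 0 + 1" 1] c01 n by fastforce
    then have "s \<in> \<int>" using J[of s 0] by simp
    then show ?thesis using int01[of s] s n 2 by auto
  next
    case 3
    then obtain s where s: "0 \<le> s" "s \<le> 1" "F s = F 0 - 1"
      using IVT2'[of F 1 "F 0 - 1" 0] c01 n by fastforce
    then have "s \<in> \<int>" using J[of s 0] by simp
    then show ?thesis using int01[of s] s n 3 by auto
  next
    case 4
    define G where "G s = F s - s" for s
    have Gc: "continuous_on {0..1} G" unfolding G_def by (intro continuous_intros c01)
    define m where "m = \<lfloor>G 0\<rfloor>"
    have "G 1 \<le> of_int m" "of_int m \<le> G 0" using n 4 unfolding G_def m_def by linarith+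
    then obtain s where s: "0 \<le> s" "s \<le> 1" "G s = of_int m"
      using IVT2'[of G 1 "of_int m" 0] Gc by fastforce
    then have "g (F s) = g s" using g_eq_iff[OF sj] unfolding G_def by simp
    then have "\<alpha> (g s) = g s" using Fg by simp
    then show ?thesis using gc by blast
  next
    case 5
    have inj: "inj_on F {0..1}"
    proof
      fix x y assume xy: "x \<in> {0..1}" "y \<in> {0..1}" "F x = F y"
      then have "x - y \<in> \<int>" using J by simp
      then obtain k :: int where k: "x - y = of_int k" by (auto elim: Ints_cases)
      have kb: "-1 \<le> real_of_int k" "real_of_int k \<le> 1" using xy k by auto
      have "k \<ge> -1" "k \<le> 1" using kb by linarith+
      then consider "k = 0" | "k = 1" | "k = -1" by linarith
      then show "x = y"
      proof cases
        case 1 then show ?thesis using k by simp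
      next
        case 2 then have "x = 1" "y = 0" using k xy by auto
        then show ?thesis using xy n 5 by simp
      next
        case 3 then have "x = 0" "y = 1" using k xy by auto
        then show ?thesis using xy n 5 by simp
      qed
    qed
    have F01: "F 0 < F 1" using n 5 by simp
    have mono: "F x < F y" if "x \<in> {0..1}" "y \<in> {0..1}" "x < y" for x y
    proof -
      have cy: "F 0 < F y"
      proof (cases "y = 1")
        case True then show ?thesis using F01 by simp
      next
        case False
        then show ?thesis using continuous_inj_imp_mono[OF _ _ c01 inj, of y] that F01 by auto
      qed
      show ?thesis
      proof (cases "x = 0")
        case True then show ?thesis using cy by simp
      next
        case False
        have "continuous_on {0..y} F" "inj_on F {0..y}"
          using continuous_on_subset[OF c01] inj_on_subset[OF inj] that by auto
        then show ?thesis using continuous_inj_imp_mono[of 0 x y F] that False cy by auto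
      qed
    qed
    have "preserves_orientation g \<alpha>"
      unfolding preserves_orientation_def
    proof (intro ballI impI)
      fix a b c assume abc: "a \<in> curve g" "b \<in> curve g" "c \<in> curve g" and d: "a \<noteq> b \<and> b \<noteq> c \<and> a \<noteq> c"
        and cy: "cyc g a b c"
      define pa pb pc where "pa = param g a" and "pb = param g b" and "pc = param g c"
      have p: "pa \<in> {0..<1}" "pb \<in> {0..<1}" "pc \<in> {0..<1}"
        using param_in[OF sj] abc unfolding pa_def pb_def pc_def by auto
      have ga: "a = g pa" "b = g pb" "c = g pc" using g_param[OF sj] abc unfolding pa_def pb_def pc_def by auto
      have ne: "pb \<noteq> pa" "pc \<noteq> pa" using ga d by auto
      have "frac (pb - pa) < frac (pc - pa)" using cy unfolding cyc_def ga pdist_g[OF sj] .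
      then have "frac (F pb - F pa) < frac (F pc - F pa)"
        using mono_frac[of F, OF mono] n 5 p ne by simp
      then show "cyc g (\<alpha> a) (\<alpha> b) (\<alpha> c)" unfolding cyc_def ga Fg[symmetric] pdist_g[OF sj] .
    qed
    then show ?thesis by simp
  qed
qed

end


lemma sep_conn:
  fixes C S T :: "'a::topological_space set"
  assumes "connected C" "C \<subseteq> S \<union> T" "S \<inter> closure T = {}" "T \<inter> closure S = {}"
  shows "C \<subseteq> S \<or> C \<subseteq> T"
  using assms connectedin_eq_subset_separated_union[of euclidean C]
  by (auto simp: separatedin_def euclidean_closure_of)

context fixes g :: "real \<Rightarrow> complex" assumes sj: "smooth_jordan_param g"
begin

lemma pdist_zero: "a \<in> curve g \<Longrightarrow> t \<in> curve g \<Longrightarrow> pdist g a t = 0 \<longleftrightarrow> t = a"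
proof -
  assume a: "a \<in> curve g" and t: "t \<in> curve g"
  have "pdist g a t = 0 \<longleftrightarrow> param g t - param g a \<in> \<int>" unfolding pdist_def by simp
  also have "\<dots> \<longleftrightarrow> g (param g t) = g (param g a)" using g_eq_iff[OF sj] by simp
  also have "\<dots> \<longleftrightarrow> t = a" using g_param[OF sj] a t by simp
  finally show ?thesis .
qed

lemma open_arc_same: "a \<in> curve g \<Longrightarrow> open_arc g a a = curve g - {a}"
  unfolding open_arc_def using pdist_zero pdist_def frac_ge_0 by (force simp: order_le_less)

lemma arc_struct:
  assumes a: "a \<in> curve g" and b: "b \<in> curve g" and ab: "a \<noteq> b"
  shows "open_arc g a b \<inter> open_arc g b a = {}"
    and "curve g - {a, b} = open_arc g a b \<union> open_arc g b a"
    and "connected (open_arc g a b)"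
    and "open_arc g a b \<noteq> {}"
    and "open_arc g a b \<inter> closure (open_arc g b a) = {}"
proof -
  define q where "q = param g a"
  define d where "d = pdist g a b"
  define \<phi> where "\<phi> s = g (q + s)" for s
  have d0: "0 < d" using pdist_zero[OF a b] ab frac_ge_0 unfolding d_def pdist_def by (force simp: order_le_less)
  have d1: "d < 1" unfolding d_def pdist_def by (rule frac_lt_1)
  have pa: "\<phi> 0 = a" "\<phi> 1 = a" unfolding \<phi>_def q_def using g_param[OF sj a] g_per1[OF sj] by auto
  have pb: "\<phi> d = b"
  proof -
    have "(q + d) - param g b \<in> \<int>" unfolding q_def d_def pdist_def frac_def by simp
    then have "\<phi> d = g (param g b)" unfolding \<phi>_def using g_eq_iff[OF sj] by blast
    then show ?thesis using g_param[OF sj b] by simp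
  qed
  have peq: "\<phi> s = \<phi> s' \<longleftrightarrow> s - s' \<in> \<int>" for s s' unfolding \<phi>_def by (rule phi_eq_iff[OF sj])
  have noint: "s \<notin> \<int>" if "-1 < s" "s < 0" for s :: real
  proof
    assume "s \<in> \<int>" then obtain k :: int where "s = of_int k" by (auto elim: Ints_cases)
    then show False using that by (cases "k < 0") auto
  qed
  have A: "open_arc g a b = \<phi> ` {0<..<d}"
    using arc_param[OF sj, of 0 d q] d0 d1 pa pb unfolding \<phi>_def by simp
  have A': "open_arc g b a = \<phi> ` {d<..<1}"
    using arc_param[OF sj, of d 1 q] d0 d1 pa pb unfolding \<phi>_def by simp
  have cA': "closure (open_arc g b a) = \<phi> ` {d..1}"
    unfolding A' \<phi>_def using closure_arc[OF sj d1] by simp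
  have cur: "curve g = \<phi> ` {0..1}" unfolding \<phi>_def using phi_01[OF sj] by simp
  show "open_arc g a b \<inter> closure (open_arc g b a) = {}"
  proof (rule equals0I)
    fix t assume "t \<in> open_arc g a b \<inter> closure (open_arc g b a)"
    then obtain s s' where "0 < s" "s < d" "d \<le> s'" "s' \<le> 1" "\<phi> s = \<phi> s'" unfolding A cA' by auto
    then show False using peq noint[of "s - s'"] by auto
  qed
  then show "open_arc g a b \<inter> open_arc g b a = {}" using closure_subset by blast
  show "curve g - {a, b} = open_arc g a b \<union> open_arc g b a"
  proof
    show "curve g - {a, b} \<subseteq> open_arc g a b \<union> open_arc g b a"
    proof
      fix t assume t: "t \<in> curve g - {a, b}"
      then obtain s where s: "s \<in> {0..1}" "t = \<phi> s" using cur by auto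
      then have "s \<noteq> 0" "s \<noteq> 1" "s \<noteq> d" using pa pb t by auto
      then show "t \<in> open_arc g a b \<union> open_arc g b a" unfolding A A' using s
        by (cases "s < d") auto
    qed
    show "open_arc g a b \<union> open_arc g b a \<subseteq> curve g - {a, b}"
    proof
      fix t assume "t \<in> open_arc g a b \<union> open_arc g b a"
      then obtain s where s: "t = \<phi> s" "0 < s" "s < 1" "s \<noteq> d" unfolding A A' using d0 d1 by fastforce
      have "t \<in> curve g" unfolding cur using s by auto
      moreover have "t \<noteq> a" using s peq[of s 0] pa by (auto simp: Ints_def)
      moreover have "t \<noteq> b"
      proof
        assume "t = b"
        then have "s - d \<in> \<int>" using s peq pb by metis
        moreover have "-1 < s - d" "s - d < 1" using s d0 d1 by auto
        ultimately show False using noint[of "s - d"] noint[of "d - s"] s(4) Ints_minus[of "s - d"]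
          by (cases "s < d") auto
      qed
      ultimately show "t \<in> curve g - {a, b}" by auto
    qed
  qed
  show "connected (open_arc g a b)" unfolding A \<phi>_def
    by (intro connected_continuous_image phi_cont[OF sj]) auto
  show "open_arc g a b \<noteq> {}" unfolding A using d0 by auto
qed

end


context fixes g :: "real \<Rightarrow> complex" and \<alpha> \<beta> :: "complex \<Rightarrow> complex"
  assumes sj: "smooth_jordan_param g" and hom: "homeomorphism (curve g) (curve g) \<alpha> \<beta>"
begin

lemma iter_props: "(\<alpha> ^^ n) ` curve g = curve g \<and> inj_on (\<alpha> ^^ n) (curve g) \<and> continuous_on (curve g) (\<alpha> ^^ n)"
proof (induction n)
  case 0 then show ?case by (simp add: continuous_on_id)
next
  case (Suc n)
  have e: "\<alpha> ^^ Suc n = \<alpha> \<circ> (\<alpha> ^^ n)" by simp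
  have i1: "(\<alpha> ^^ n) ` curve g = curve g" and i2: "inj_on (\<alpha> ^^ n) (curve g)"
    and i3: "continuous_on (curve g) (\<alpha> ^^ n)" using Suc by auto
  have "(\<alpha> \<circ> (\<alpha> ^^ n)) ` curve g = \<alpha> ` ((\<alpha> ^^ n) ` curve g)" by (rule image_comp[symmetric])
  then have j1: "(\<alpha> \<circ> (\<alpha> ^^ n)) ` curve g = curve g" using i1 al_im[OF sj hom] by simp
  have j2: "inj_on (\<alpha> \<circ> (\<alpha> ^^ n)) (curve g)"
    by (rule comp_inj_on[OF i2]) (simp add: i1 al_inj[OF sj hom])
  have j3: "continuous_on (curve g) (\<alpha> \<circ> (\<alpha> ^^ n))"
    by (rule continuous_on_compose[OF i3]) (simp add: i1 al_cont[OF sj hom])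
  show ?case unfolding e using j1 j2 j3 by blast
qed

lemma iter_pres: "preserves_orientation g \<alpha> \<Longrightarrow> preserves_orientation g (\<alpha> ^^ n)"
proof (induction n)
  case 0 then show ?case unfolding preserves_orientation_def by simp
next
  case (Suc n)
  have im: "(\<alpha> ^^ n) ` curve g = curve g" and inj: "inj_on (\<alpha> ^^ n) (curve g)" using iter_props by auto
  show ?case unfolding preserves_orientation_def
  proof (intro ballI impI)
    fix a b c assume abc: "a \<in> curve g" "b \<in> curve g" "c \<in> curve g" and d: "a \<noteq> b \<and> b \<noteq> c \<and> a \<noteq> c"
      and cy: "cyc g a b c"
    have c1: "cyc g ((\<alpha> ^^ n) a) ((\<alpha> ^^ n) b) ((\<alpha> ^^ n) c)"
      using Suc.IH[OF Suc.prems] abc d cy unfolding preserves_orientation_def by blast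
    have "(\<alpha> ^^ n) a \<in> curve g" "(\<alpha> ^^ n) b \<in> curve g" "(\<alpha> ^^ n) c \<in> curve g" using im abc by auto
    moreover have "(\<alpha> ^^ n) a \<noteq> (\<alpha> ^^ n) b \<and> (\<alpha> ^^ n) b \<noteq> (\<alpha> ^^ n) c \<and> (\<alpha> ^^ n) a \<noteq> (\<alpha> ^^ n) c"
      using inj abc d by (meson inj_onD)
    ultimately show "cyc g ((\<alpha> ^^ Suc n) a) ((\<alpha> ^^ Suc n) b) ((\<alpha> ^^ Suc n) c)"
      using Suc.prems c1 unfolding preserves_orientation_def by simp
  qed
qed

lemma sides:
  assumes a: "a \<in> curve g" and b: "b \<in> curve g" and ab: "a \<noteq> b"
    and sim: "\<sigma> ` curve g = curve g" and sinj: "inj_on \<sigma> (curve g)" and sc: "continuous_on (curve g) \<sigma>"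
    and sab: "\<sigma> ` {a, b} = {a, b}"
  shows "(\<sigma> ` open_arc g a b \<subseteq> open_arc g a b \<and> \<sigma> ` open_arc g b a \<subseteq> open_arc g b a) \<or>
         (\<sigma> ` open_arc g a b \<subseteq> open_arc g b a \<and> \<sigma> ` open_arc g b a \<subseteq> open_arc g a b)"
proof -
  define A where "A = open_arc g a b"
  define A' where "A' = open_arc g b a"
  have dis: "A \<inter> A' = {}" and un: "curve g - {a, b} = A \<union> A'" and cA: "connected A" and neA: "A \<noteq> {}"
    and s1: "A \<inter> closure A' = {}"
    using arc_struct[OF sj a b ab] unfolding A_def A'_def by auto
  have cA': "connected A'" and neA': "A' \<noteq> {}" and s2: "A' \<inter> closure A = {}"
    using arc_struct[OF sj b a] ab a b unfolding A_def A'_def by auto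
  have "\<sigma> ` (curve g - {a, b}) = \<sigma> ` curve g - \<sigma> ` {a, b}"
    by (rule inj_on_image_set_diff[OF sinj]) (use a b in auto)
  then have diff: "\<sigma> ` (curve g - {a, b}) = curve g - {a, b}" using sim sab by simp
  have into: "\<sigma> ` X \<subseteq> A \<or> \<sigma> ` X \<subseteq> A'" if X: "X = A \<or> X = A'" for X
  proof -
    have Xs: "X \<subseteq> curve g - {a, b}" using X un by auto
    have Xs': "X \<subseteq> curve g" using Xs by auto
    have cX: "connected X" using X cA cA' by auto
    have conn: "connected (\<sigma> ` X)" by (rule connected_continuous_image[OF continuous_on_subset[OF sc Xs'] cX])
    have "\<sigma> ` X \<subseteq> \<sigma> ` (curve g - {a, b})" by (rule image_mono[OF Xs])
    then have sub: "\<sigma> ` X \<subseteq> A \<union> A'" using diff un by simp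
    show ?thesis by (rule sep_conn[OF conn sub s1 s2])
  qed
  have cover: "curve g - {a, b} = \<sigma> ` A \<union> \<sigma> ` A'" using diff un by (simp add: image_Un)
  have nb1: "\<not> (\<sigma> ` A \<subseteq> A \<and> \<sigma> ` A' \<subseteq> A)"
  proof
    assume "\<sigma> ` A \<subseteq> A \<and> \<sigma> ` A' \<subseteq> A"
    then have "\<sigma> ` A \<union> \<sigma> ` A' \<subseteq> A" by simp
    then have "A \<union> A' \<subseteq> A" using cover un by simp
    then have "A' \<subseteq> A" by simp
    then show False using dis neA' by auto
  qed
  have nb2: "\<not> (\<sigma> ` A \<subseteq> A' \<and> \<sigma> ` A' \<subseteq> A')"
  proof
    assume "\<sigma> ` A \<subseteq> A' \<and> \<sigma> ` A' \<subseteq> A'"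
    then have "\<sigma> ` A \<union> \<sigma> ` A' \<subseteq> A'" by simp
    then have "A \<union> A' \<subseteq> A'" using cover un by simp
    then have "A \<subseteq> A'" by simp
    then show False using dis neA by auto
  qed
  have i1: "\<sigma> ` A \<subseteq> A \<or> \<sigma> ` A \<subseteq> A'" using into by simp
  have i2: "\<sigma> ` A' \<subseteq> A \<or> \<sigma> ` A' \<subseteq> A'" using into by simp
  from i1 i2 nb1 nb2 have "(\<sigma> ` A \<subseteq> A \<and> \<sigma> ` A' \<subseteq> A') \<or> (\<sigma> ` A \<subseteq> A' \<and> \<sigma> ` A' \<subseteq> A)"
    by argo
  then show ?thesis unfolding A_def A'_def .
qed

lemma invariance:
  assumes a: "a \<in> Lam g \<alpha>" and b: "b \<in> Lam g \<alpha>"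
  shows "(\<alpha> ^^ mult_m g \<alpha>) ` open_arc g a b = open_arc g a b"
proof -
  define h where "h = \<alpha> ^^ mult_m g \<alpha>"
  have him: "h ` curve g = curve g" and hinj: "inj_on h (curve g)" and hc: "continuous_on (curve g) h"
    using iter_props unfolding h_def by auto
  have ac: "a \<in> curve g" "h a = a" and bc: "b \<in> curve g" "h b = b" using a b unfolding Lam_def h_def by auto
  have hdiff: "h ` (curve g - X) = curve g - X" if "X \<subseteq> curve g" "h ` X = X" for X
  proof -
    have "h ` (curve g - X) = h ` curve g - h ` X"
      by (rule inj_on_image_set_diff[OF hinj]) (use that in auto)
    then show ?thesis using him that by simp
  qed
  show ?thesis
  proof (cases "a = b")
    case True
    have "h ` (curve g - {a}) = curve g - {a}" by (rule hdiff) (use ac in auto)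
    then show ?thesis unfolding h_def[symmetric] True open_arc_same[OF sj bc(1)] using True by simp
  next
    case False
    define A where "A = open_arc g a b"
    define A' where "A' = open_arc g b a"
    have dis: "A \<inter> A' = {}" and un: "curve g - {a, b} = A \<union> A'" and neA: "A \<noteq> {}"
      using arc_struct[OF sj ac(1) bc(1) False] unfolding A_def A'_def by auto
    have neA': "A' \<noteq> {}" using arc_struct[OF sj bc(1) ac(1)] False unfolding A'_def by auto
    have hab: "h ` {a, b} = {a, b}" using ac bc by auto
    have good: "h ` A \<subseteq> A \<and> h ` A' \<subseteq> A'"
    proof (cases "preserves_orientation g \<alpha>")
      case True
      have hp: "preserves_orientation g h" unfolding h_def by (rule iter_pres[OF True])
      have keep: "h ` open_arc g x y \<subseteq> open_arc g x y"
        if xy: "x \<in> curve g" "y \<in> curve g" "x \<noteq> y" "h x = x" "h y = y" for x y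
      proof
        fix u assume "u \<in> h ` open_arc g x y"
        then obtain t where t: "t \<in> open_arc g x y" "u = h t" by auto
        have tc: "t \<in> curve g" and t0: "0 < pdist g x t" and tl: "pdist g x t < pdist g x y"
          using t xy unfolding open_arc_def by auto
        have tx: "t \<noteq> x" using t0 pdist_zero[OF sj xy(1) tc] by auto
        have ty: "t \<noteq> y" using tl by auto
        have cy: "cyc g x t y" using tl unfolding cyc_def .
        have "cyc g (h x) (h t) (h y)"
          using hp[unfolded preserves_orientation_def, rule_format, OF xy(1) tc xy(2)] tx ty xy(3) cy by auto
        then have l: "pdist g x (h t) < pdist g x y" using xy unfolding cyc_def by simp
        have htc: "h t \<in> curve g" using him tc by auto
        have "h t \<noteq> x" using hinj tc xy tx by (metis inj_onD)
        then have "pdist g x (h t) \<noteq> 0" using pdist_zero[OF sj xy(1) htc] by simp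
        then have "0 < pdist g x (h t)" using frac_ge_0 unfolding pdist_def by (simp add: order_le_less)
        then show "u \<in> open_arc g x y" using l htc t unfolding open_arc_def by auto
      qed
      have "h ` A \<subseteq> A" unfolding A_def by (rule keep) (use ac bc False in auto)
      moreover have "h ` A' \<subseteq> A'" unfolding A'_def by (rule keep) (use ac bc False in auto)
      ultimately show ?thesis by simp
    next
      case False
      then have m2: "mult_m g \<alpha> = 2" unfolding mult_m_def by simp
      then have hdef: "h = \<alpha> \<circ> \<alpha>" unfolding h_def by (simp add: numeral_2_eq_2)
      have sd: "(h ` A \<subseteq> A \<and> h ` A' \<subseteq> A') \<or> (h ` A \<subseteq> A' \<and> h ` A' \<subseteq> A)"
        using sides[OF ac(1) bc(1) \<open>a \<noteq> b\<close> him hinj hc hab] unfolding A_def A'_def .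
      show ?thesis
      proof (cases "\<exists>c\<in>curve g - {a, b}. h c = c")
        case True
        then obtain c where c: "c \<in> A \<union> A'" "h c = c" using un by auto
        show ?thesis
        proof (cases "c \<in> A")
          case True
          then have "c \<in> h ` A" using c(2) by (metis image_eqI)
          then have "\<not> h ` A \<subseteq> A'" using True dis by auto
          then show ?thesis using sd by simp
        next
          case False
          then have cA': "c \<in> A'" using c by simp
          then have "c \<in> h ` A'" using c(2) by (metis image_eqI)
          then have "\<not> h ` A' \<subseteq> A" using cA' dis by auto
          then show ?thesis using sd by simp
        qed
      next
        case nf: False
        have aim: "\<alpha> ` curve g = curve g" and ainj: "inj_on \<alpha> (curve g)" and acont: "continuous_on (curve g) \<alpha>"
          using al_im[OF sj hom] al_inj[OF sj hom] al_cont[OF sj hom] by auto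
        have fixa: "h (\<alpha> x) = \<alpha> x" if "h x = x" for x
          using that unfolding hdef by simp
        have "\<alpha> a \<in> curve g" "\<alpha> b \<in> curve g" using aim ac bc by auto
        then have "\<alpha> a \<in> {a, b}" "\<alpha> b \<in> {a, b}"
          using fixa[OF ac(2)] fixa[OF bc(2)] nf by auto
        moreover have "\<alpha> a \<noteq> \<alpha> b" using ainj ac bc \<open>a \<noteq> b\<close> by (meson inj_onD)
        ultimately have aab: "\<alpha> ` {a, b} = {a, b}" by auto
        have sa: "(\<alpha> ` A \<subseteq> A \<and> \<alpha> ` A' \<subseteq> A') \<or> (\<alpha> ` A \<subseteq> A' \<and> \<alpha> ` A' \<subseteq> A)"
          using sides[OF ac(1) bc(1) \<open>a \<noteq> b\<close> aim ainj acont aab] unfolding A_def A'_def .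
        have hA: "h ` X = \<alpha> ` (\<alpha> ` X)" for X unfolding hdef by (simp add: image_comp)
        show ?thesis
        proof (cases "\<alpha> ` A \<subseteq> A \<and> \<alpha> ` A' \<subseteq> A'")
          case True
          then have "\<alpha> ` (\<alpha> ` A) \<subseteq> A" "\<alpha> ` (\<alpha> ` A') \<subseteq> A'"
            by (meson image_mono order_trans)+
          then show ?thesis unfolding hA by simp
        next
          case False
          then have s2: "\<alpha> ` A \<subseteq> A'" "\<alpha> ` A' \<subseteq> A" using sa by auto
          then have "\<alpha> ` (\<alpha> ` A) \<subseteq> A" "\<alpha> ` (\<alpha> ` A') \<subseteq> A'"
            by (meson image_mono order_trans)+
          then show ?thesis unfolding hA by simp
        qed
      qed
    qed
    have hd: "h ` (curve g - {a, b}) = curve g - {a, b}" by (rule hdiff) (use ac bc in auto)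
    have "h ` A = A"
    proof
      show "h ` A \<subseteq> A" using good by simp
      show "A \<subseteq> h ` A"
      proof
        fix y assume y: "y \<in> A"
        then have "y \<in> h ` (A \<union> A')" using hd un by simp
        then obtain x where x: "x \<in> A \<union> A'" "y = h x" by auto
        show "y \<in> h ` A"
        proof (cases "x \<in> A")
          case True then show ?thesis using x by simp
        next
          case False
          then have "x \<in> A'" using x by simp
          then have "y \<in> A'" using good x by auto
          then show ?thesis using y dis by auto
        qed
      qed
    qed
    then show ?thesis unfolding A_def h_def .
  qed
qed

end


lemma cover_int:
  fixes p :: "nat \<Rightarrow> real"
  assumes "0 < N" "\<forall>i<N. p i \<le> p (Suc i)" "p 0 \<le> t" "t \<le> p N"
  shows "\<exists>i<N. p i \<le> t \<and> t \<le> p (Suc i)"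
  using assms
proof (induction N)
  case 0 then show ?case by simp
next
  case (Suc N)
  show ?case
  proof (cases "t \<le> p N \<and> 0 < N")
    case True
    then obtain i where "i < N" "p i \<le> t" "t \<le> p (Suc i)" using Suc by auto
    then show ?thesis by (intro exI[of _ i]) auto
  next
    case False
    then have "p N \<le> t" using Suc.prems by (cases "N = 0") auto
    then show ?thesis using Suc.prems by (intro exI[of _ N]) auto
  qed
qed

context fixes g :: "real \<Rightarrow> complex" and \<alpha> \<beta> :: "complex \<Rightarrow> complex"
  assumes sj: "smooth_jordan_param g" and hom: "homeomorphism (curve g) (curve g) \<alpha> \<beta>"
begin

lemma h_props: "(\<alpha> ^^ mult_m g \<alpha>) ` curve g = curve g" "continuous_on (curve g) (\<alpha> ^^ mult_m g \<alpha>)"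
  using iter_props[OF sj hom] by auto

lemma Lam_closed: "closed (Lam g \<alpha>)"
proof -
  have "Lam g \<alpha> = {t \<in> curve g. (\<lambda>t. (\<alpha> ^^ mult_m g \<alpha>) t - t) t = 0}" unfolding Lam_def by simp
  moreover have "continuous_on (curve g) (\<lambda>t. (\<alpha> ^^ mult_m g \<alpha>) t - t)"
    by (rule continuous_on_diff[OF h_props(2) continuous_on_id])
  then have "closed {t \<in> curve g. (\<lambda>t. (\<alpha> ^^ mult_m g \<alpha>) t - t) t = 0}"
    by (rule continuous_closed_preimage_constant[OF _ closed_curve[OF sj]])
  ultimately show ?thesis by simp
qed

lemma Phi_sub: "Phi g \<alpha> \<subseteq> curve g"
  unfolding Phi_def by (rule closure_minimal[OF _ closed_curve[OF sj]]) auto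

lemma cover_LP: "curve g \<subseteq> Lam g \<alpha> \<union> Phi g \<alpha>"
proof
  fix x assume x: "x \<in> curve g"
  show "x \<in> Lam g \<alpha> \<union> Phi g \<alpha>"
  proof (cases "(\<alpha> ^^ mult_m g \<alpha>) x = x")
    case True then show ?thesis using x unfolding Lam_def by simp
  next
    case False
    then have "x \<in> {t \<in> curve g. (\<alpha> ^^ mult_m g \<alpha>) t \<noteq> t}" using x by simp
    then have "x \<in> Phi g \<alpha>" unfolding Phi_def by (rule subsetD[OF closure_subset])
    then show ?thesis by simp
  qed
qed

lemma Y_closed: "closed (Ybd g \<alpha>)" unfolding Ybd_def Phi_def by (intro closed_Int Lam_closed) auto

lemma Y_sub: "Ybd g \<alpha> \<subseteq> Lam g \<alpha>" unfolding Ybd_def by auto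
lemma Y_curve: "Ybd g \<alpha> \<subseteq> curve g" unfolding Ybd_def Lam_def by auto

lemma classify:
  assumes "A \<subseteq> curve g" "connected A" "A \<inter> Ybd g \<alpha> = {}"
  shows "A \<subseteq> curve g - Phi g \<alpha> \<or> A \<subseteq> Phi g \<alpha> - Lam g \<alpha>"
proof -
  have Y: "\<not> (x \<in> Lam g \<alpha> \<and> x \<in> Phi g \<alpha>)" if "x \<in> A" for x
  proof
    assume "x \<in> Lam g \<alpha> \<and> x \<in> Phi g \<alpha>"
    then have "x \<in> A \<inter> Ybd g \<alpha>" using that unfolding Ybd_def by simp
    then show False using assms(3) by simp
  qed
  have cl: "closure (A \<inter> X) \<subseteq> X" if "closed X" for X
    by (rule closure_minimal) (auto simp: that)
  have cP: "closure (A \<inter> Phi g \<alpha>) \<subseteq> Phi g \<alpha>" by (rule cl) (simp add: Phi_def)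
  have cL: "closure (A \<inter> Lam g \<alpha>) \<subseteq> Lam g \<alpha>" by (rule cl[OF Lam_closed])
  have sub: "A \<subseteq> (A \<inter> Lam g \<alpha>) \<union> (A \<inter> Phi g \<alpha>)" using assms(1) cover_LP by auto
  have s1: "(A \<inter> Lam g \<alpha>) \<inter> closure (A \<inter> Phi g \<alpha>) = {}"
  proof (rule equals0I)
    fix x assume "x \<in> (A \<inter> Lam g \<alpha>) \<inter> closure (A \<inter> Phi g \<alpha>)"
    then have "x \<in> A" "x \<in> Lam g \<alpha>" "x \<in> Phi g \<alpha>" using cP by auto
    then show False using Y by simp
  qed
  have s2: "(A \<inter> Phi g \<alpha>) \<inter> closure (A \<inter> Lam g \<alpha>) = {}"
  proof (rule equals0I)
    fix x assume "x \<in> (A \<inter> Phi g \<alpha>) \<inter> closure (A \<inter> Lam g \<alpha>)"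
    then have "x \<in> A" "x \<in> Lam g \<alpha>" "x \<in> Phi g \<alpha>" using cL by auto
    then show False using Y by simp
  qed
  from sep_conn[OF assms(2) sub s1 s2]
  show ?thesis
  proof
    assume h: "A \<subseteq> A \<inter> Lam g \<alpha>"
    have "A \<subseteq> curve g - Phi g \<alpha>"
    proof
      fix x assume x: "x \<in> A"
      then have "x \<in> Lam g \<alpha>" using h by auto
      then show "x \<in> curve g - Phi g \<alpha>" using Y[OF x] x assms(1) by auto
    qed
    then show ?thesis by simp
  next
    assume h: "A \<subseteq> A \<inter> Phi g \<alpha>"
    have "A \<subseteq> Phi g \<alpha> - Lam g \<alpha>"
    proof
      fix x assume x: "x \<in> A"
      then have "x \<in> Phi g \<alpha>" using h by auto
      then show "x \<in> Phi g \<alpha> - Lam g \<alpha>" using Y[OF x] by auto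
    qed
    then show ?thesis by simp
  qed
qed

lemma Lam_ne:
  assumes "\<exists>\<tau>. is_periodic_point (curve g) \<alpha> \<tau>"
  shows "Lam g \<alpha> \<noteq> {}"
proof (cases "preserves_orientation g \<alpha>")
  case True
  have ex: "\<exists>n. n > 0 \<and> (\<exists>\<tau>\<in>curve g. (\<alpha> ^^ n) \<tau> = \<tau>)" using assms unfolding is_periodic_point_def by blast
  have "mult_m g \<alpha> > 0 \<and> (\<exists>\<tau>\<in>curve g. (\<alpha> ^^ mult_m g \<alpha>) \<tau> = \<tau>)"
    unfolding mult_m_def using True LeastI_ex[OF ex] by simp
  then show ?thesis unfolding Lam_def by auto
next
  case False
  then obtain t where "t \<in> curve g" "\<alpha> t = t" using dichotomy[OF sj hom] by blast
  moreover have "mult_m g \<alpha> = 2" using False unfolding mult_m_def by simp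
  ultimately show ?thesis unfolding Lam_def by (auto simp: numeral_2_eq_2 intro!: exI[of _ t])
qed

lemma limpt_transfer:
  assumes "s islimpt {s \<in> {0..1}. g (q + s) \<in> Ybd g \<alpha>}"
  shows "g (q + s) \<in> Ylim g \<alpha>"
proof -
  have ct: "isCont (\<lambda>s. g (q + s)) s"
    using phi_cont[OF sj, of UNIV q] continuous_on_eq_continuous_at[of UNIV] by auto
  have "g (q + s) islimpt Ybd g \<alpha>"
    unfolding islimpt_approachable
  proof (intro allI impI)
    fix e :: real assume e: "e > 0"
    obtain d where d: "d > 0" "\<And>s'. dist s' s < d \<Longrightarrow> dist (g (q + s')) (g (q + s)) < e"
      using ct e unfolding continuous_at_eps_delta by blast
    have md: "min d (1/2) > 0" using d(1) by simp
    obtain s' where s': "s' \<in> {s \<in> {0..1}. g (q + s) \<in> Ybd g \<alpha>}" "s' \<noteq> s" "dist s' s < min d (1/2)"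
      using assms[unfolded islimpt_approachable, rule_format, OF md] by blast
    have "g (q + s') \<noteq> g (q + s)"
    proof
      assume "g (q + s') = g (q + s)"
      then have "s' - s \<in> \<int>" using phi_eq_iff[OF sj] by blast
      then obtain k :: int where k: "s' - s = of_int k" by (auto elim: Ints_cases)
      have "\<bar>s' - s\<bar> < 1/2" using s'(3) by (simp add: dist_real_def)
      then have "-1 < real_of_int k" "real_of_int k < 1" using k by auto
      then have "-1 < k" "k < 1" by linarith+
      then have "k = 0" by linarith
      then show False using k s'(2) by simp
    qed
    then show "\<exists>x'\<in>Ybd g \<alpha>. x' \<noteq> g (q + s) \<and> dist x' (g (q + s)) < e"
      using s' d(2)[of s'] by (intro bexI[of _ "g (q + s')"]) auto
  qed
  then show ?thesis unfolding Ylim_def by simp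
qed

end


context fixes g :: "real \<Rightarrow> complex" and \<alpha> \<beta> :: "complex \<Rightarrow> complex"
  assumes sj: "smooth_jordan_param g" and hom: "homeomorphism (curve g) (curve g) \<alpha> \<beta>"
begin

lemma decomp:
  assumes y0: "y0 \<in> Ybd g \<alpha>" and fc: "continuous_on (curve g) f" and fpos: "\<forall>\<tau>\<in>Ylim g \<alpha>. f \<tau> > (0::real)"
  shows "\<exists>W G V. finite W \<and> finite G \<and> finite V \<and>
         W \<inter> G = {} \<and> W \<inter> V = {} \<and> G \<inter> V = {} \<and> pairwise disjnt (W \<union> G \<union> V) \<and>
         (\<forall>\<omega>\<in>W. adm_arc g \<alpha> \<omega> \<and> \<omega> \<subseteq> curve g - Phi g \<alpha>) \<and>
         (\<forall>\<gamma>\<in>G. adm_arc g \<alpha> \<gamma> \<and> \<gamma> \<subseteq> Phi g \<alpha> - Lam g \<alpha>) \<and>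
         (\<forall>v\<in>V. adm_arc g \<alpha> v \<and> v \<subseteq> curve g \<and> closure v \<inter> Ylim g \<alpha> \<noteq> {} \<and>
                 (\<forall>t\<in>closure v. f t > 0)) \<and>
         curve g = (\<Union>\<omega>\<in>W. closure \<omega>) \<union> (\<Union>\<gamma>\<in>G. closure \<gamma>) \<union> (\<Union>v\<in>V. closure v)"
proof -
  define q where "q = param g y0"
  define \<phi> where "\<phi> s = g (q + s)" for s
  define S where "S = {s \<in> {0..1}. \<phi> s \<in> Ybd g \<alpha>}"
  define Ff where "Ff s = f (\<phi> s)" for s
  have y0c: "y0 \<in> curve g" using y0 Y_curve[OF sj hom] by auto
  have \<phi>0: "\<phi> 0 = y0" unfolding \<phi>_def q_def using g_param[OF sj y0c] by simp
  have \<phi>1: "\<phi> 1 = y0" unfolding \<phi>_def q_def using g_param[OF sj y0c] g_per1[OF sj] by simp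
  have cur: "\<phi> ` {0..1} = curve g" unfolding \<phi>_def by (rule phi_01[OF sj])
  have \<phi>c: "continuous_on X \<phi>" for X unfolding \<phi>_def by (rule phi_cont[OF sj])
  have \<phi>eq: "\<phi> s = \<phi> s' \<longleftrightarrow> s - s' \<in> \<int>" for s s' unfolding \<phi>_def by (rule phi_eq_iff[OF sj])
  have Seq: "S = {0..1} \<inter> \<phi> -` Ybd g \<alpha>" unfolding S_def by auto
  have Scl: "closed S" unfolding Seq by (rule continuous_closed_preimage[OF \<phi>c closed_atLeastAtMost Y_closed[OF sj hom]])
  have Ssub: "S \<subseteq> {0..1}" unfolding S_def by auto
  have S0: "0 \<in> S" unfolding S_def using \<phi>0 y0 by simp
  have S1: "1 \<in> S" unfolding S_def using \<phi>1 y0 by simp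
  have Fc: "continuous_on {0..1} Ff" unfolding Ff_def
    by (rule continuous_on_compose2[OF fc \<phi>c]) (use cur in auto)
  have lim: "\<phi> s \<in> Ylim g \<alpha>" if "s islimpt S" for s
    using limpt_transfer[OF sj hom, of s q] that unfolding S_def \<phi>_def by simp
  have Fpos: "\<forall>s\<in>{0..1}. s islimpt S \<longrightarrow> Ff s > 0" unfolding Ff_def using lim fpos by auto
  obtain ps where ps: "chainI S Ff ps" "hd ps = 0" "last ps = 1"
    using chain_exists[OF Scl Ssub S0 S1 Fc Fpos] by blast
  have psne: "ps \<noteq> []" and so: "sorted_wrt (<) ps" and pset: "set ps \<subseteq> S"
    and gdl: "\<And>i. Suc i < length ps \<Longrightarrow> goodI S Ff (ps!i) (ps!Suc i)"
    using ps(1) unfolding chainI_def by auto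
  define N where "N = length ps - 1"
  define p where "p i = ps ! i" for i
  have len: "length ps = Suc N" unfolding N_def using psne by simp
  have p0: "p 0 = 0" unfolding p_def using ps(2) psne by (simp add: hd_conv_nth)
  have pN: "p N = 1" unfolding p_def N_def using ps(3) psne by (simp add: last_conv_nth)
  have Npos: "0 < N" using p0 pN by (cases "N = 0") auto
  have pS: "p i \<in> S" if "i \<le> N" for i unfolding p_def using pset len that by (metis in_mono less_Suc_eq_le nth_mem)
  have p01: "0 \<le> p i" "p i \<le> 1" if "i \<le> N" for i using pS[OF that] Ssub by auto
  have pmono: "p i < p j" if "i < j" "j \<le> N" for i j
    unfolding p_def using sorted_wrt_nth_less[OF so that(1)] that len by simp
  have gd: "goodI S Ff (p i) (p (Suc i))" if "i < N" for i unfolding p_def using gdl len that by simp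
  define arc where "arc i = \<phi> ` {p i<..<p (Suc i)}" for i
  have arc_eq: "arc i = open_arc g (\<phi> (p i)) (\<phi> (p (Suc i)))" if "i < N" for i
    unfolding arc_def \<phi>_def using arc_param[OF sj p01(1)[of i] pmono[of i "Suc i"] p01(2)[of "Suc i"], of q] that
    by simp
  have clo: "closure (arc i) = \<phi> ` {p i..p (Suc i)}" if "i < N" for i
    unfolding arc_def \<phi>_def using closure_arc[OF sj pmono[of i "Suc i"]] that by simp
  have ne: "arc i \<noteq> {}" if "i < N" for i unfolding arc_def using pmono[of i "Suc i"] that by auto
  have arc_sub: "arc i \<subseteq> \<phi> ` {0<..<1}" if "i < N" for i
  proof -
    have "p 0 \<le> p i" using pmono[of 0 i] that by (cases "i = 0") auto
    moreover have "p (Suc i) \<le> p N" using pmono[of "Suc i" N] that by (cases "Suc i = N") auto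
    ultimately show ?thesis unfolding arc_def using p0 pN by (intro image_mono) auto
  qed
  have "\<phi> ` {0<..<1} \<subseteq> \<phi> ` {0..1}" by (rule image_mono) auto
  then have arc_curve: "arc i \<subseteq> curve g" if "i < N" for i using arc_sub[OF that] cur by simp
  have disj_lt: "arc i \<inter> arc j = {}" if "i < j" "j < N" for i j
  proof (rule equals0I)
    fix t assume "t \<in> arc i \<inter> arc j"
    then obtain s s' where s: "p i < s" "s < p (Suc i)" "p j < s'" "s' < p (Suc j)" "\<phi> s = \<phi> s'"
      unfolding arc_def by auto
    have "p (Suc i) \<le> p j" using pmono[of "Suc i" j] that by (cases "Suc i = j") auto
    moreover have "0 \<le> p i" "p (Suc j) \<le> 1" using p01 that by auto
    ultimately have r: "0 < s' - s" "s' - s < 1" using s by auto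
    have "s' - s \<in> \<int>" using s(5) \<phi>eq by metis
    then obtain k :: int where k: "s' - s = of_int k" by (auto elim: Ints_cases)
    have "0 < k" "k < 1" using r k by simp_all
    then show False by simp
  qed
  have disj: "arc i \<inter> arc j = {}" if "i < N" "j < N" "i \<noteq> j" for i j
    using disj_lt[of i j] disj_lt[of j i] that by (cases "i < j") (auto simp: Int_commute)
  have injA: "inj_on arc {..<N}"
  proof
    fix i j assume "i \<in> {..<N}" "j \<in> {..<N}" "arc i = arc j"
    then show "i = j" using disj[of i j] ne[of i] by auto
  qed
  have Ysub: "Ybd g \<alpha> \<subseteq> Lam g \<alpha>" by (rule Y_sub[OF sj hom])
  have adm: "adm_arc g \<alpha> (arc i)" if "i < N" for i
  proof -
    have e1: "\<phi> (p i) \<in> Ybd g \<alpha>" "\<phi> (p (Suc i)) \<in> Ybd g \<alpha>" using pS that unfolding S_def by auto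
    have "(\<alpha> ^^ mult_m g \<alpha>) ` arc i = arc i"
      unfolding arc_eq[OF that] by (rule invariance[OF sj hom]) (use e1 Ysub in auto)
    then show ?thesis unfolding adm_arc_def using e1 arc_eq[OF that] by blast
  qed
  define gap where "gap i \<longleftrightarrow> S \<inter> {p i<..<p (Suc i)} = {}" for i
  have gapY: "arc i \<inter> Ybd g \<alpha> = {}" if "i < N" "gap i" for i
  proof (rule equals0I)
    fix t assume "t \<in> arc i \<inter> Ybd g \<alpha>"
    then obtain s where s: "p i < s" "s < p (Suc i)" "\<phi> s \<in> Ybd g \<alpha>" unfolding arc_def by auto
    have "s \<in> {0..1}" using s p01[of i] p01[of "Suc i"] that(1) by auto
    then have "s \<in> S \<inter> {p i<..<p (Suc i)}" using s unfolding S_def by auto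
    then show False using that(2) unfolding gap_def by auto
  qed
  have conn: "connected (arc i)" for i unfolding arc_def by (intro connected_continuous_image \<phi>c) auto
  define IW where "IW = {i. i < N \<and> gap i \<and> arc i \<subseteq> curve g - Phi g \<alpha>}"
  define IG where "IG = {i. i < N \<and> gap i \<and> \<not> arc i \<subseteq> curve g - Phi g \<alpha>}"
  define IV where "IV = {i. i < N \<and> \<not> gap i}"
  have IU: "IW \<union> IG \<union> IV = {..<N}" unfolding IW_def IG_def IV_def by auto
  have Isub: "IW \<subseteq> {..<N}" "IG \<subseteq> {..<N}" "IV \<subseteq> {..<N}" unfolding IW_def IG_def IV_def by auto
  have Id: "IW \<inter> IG = {}" "IW \<inter> IV = {}" "IG \<inter> IV = {}" unfolding IW_def IG_def IV_def by auto
  define W where "W = arc ` IW"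
  define G where "G = arc ` IG"
  define V where "V = arc ` IV"
  have fin: "finite W" "finite G" "finite V" unfolding W_def G_def V_def
    using Isub by (auto intro: finite_subset)
  have WG: "W \<inter> G = {}" "W \<inter> V = {}" "G \<inter> V = {}" unfolding W_def G_def V_def
    using inj_on_image_Int[OF injA Isub(1) Isub(2)] inj_on_image_Int[OF injA Isub(1) Isub(3)]
      inj_on_image_Int[OF injA Isub(2) Isub(3)] Id by auto
  have U: "W \<union> G \<union> V = arc ` {..<N}" unfolding W_def G_def V_def IU[symmetric] by (simp add: image_Un)
  have pw: "pairwise disjnt (W \<union> G \<union> V)" unfolding U pairwise_def disjnt_def
  proof (intro ballI impI)
    fix X Y assume "X \<in> arc ` {..<N}" "Y \<in> arc ` {..<N}" "X \<noteq> Y"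
    then obtain i j where "i < N" "j < N" "X = arc i" "Y = arc j" "i \<noteq> j" by auto
    then show "X \<inter> Y = {}" using disj by simp
  qed
  have Wp: "\<forall>\<omega>\<in>W. adm_arc g \<alpha> \<omega> \<and> \<omega> \<subseteq> curve g - Phi g \<alpha>"
    unfolding W_def IW_def using adm by auto
  have Gp: "\<forall>\<gamma>\<in>G. adm_arc g \<alpha> \<gamma> \<and> \<gamma> \<subseteq> Phi g \<alpha> - Lam g \<alpha>"
  proof
    fix \<gamma> assume "\<gamma> \<in> G"
    then obtain i where i: "i < N" "gap i" "\<not> arc i \<subseteq> curve g - Phi g \<alpha>" "\<gamma> = arc i"
      unfolding G_def IG_def by auto
    have "arc i \<subseteq> Phi g \<alpha> - Lam g \<alpha>"
      using classify[OF sj hom arc_curve[OF i(1)] conn gapY[OF i(1,2)]] i(3) by simp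
    then show "adm_arc g \<alpha> \<gamma> \<and> \<gamma> \<subseteq> Phi g \<alpha> - Lam g \<alpha>" using adm[OF i(1)] i(4) by simp
  qed
  have Vp: "\<forall>v\<in>V. adm_arc g \<alpha> v \<and> v \<subseteq> curve g \<and> closure v \<inter> Ylim g \<alpha> \<noteq> {} \<and> (\<forall>t\<in>closure v. f t > 0)"
  proof
    fix v assume "v \<in> V"
    then obtain i where i: "i < N" "\<not> gap i" "v = arc i" unfolding V_def IV_def by auto
    have pos: "\<forall>s\<in>{p i..p (Suc i)}. Ff s > 0" and ex: "\<exists>s\<in>{p i..p (Suc i)}. s islimpt S"
      using gd[OF i(1)] i(2) unfolding goodI_def gap_def by auto
    obtain s where s: "s \<in> {p i..p (Suc i)}" "s islimpt S" using ex by blast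
    have "\<phi> s \<in> closure v \<inter> Ylim g \<alpha>" using lim[OF s(2)] s(1) clo[OF i(1)] i(3) by auto
    then have c1: "closure v \<inter> Ylim g \<alpha> \<noteq> {}" by blast
    have c2: "\<forall>t\<in>closure v. f t > 0" using pos clo[OF i(1)] i(3) unfolding Ff_def by auto
    show "adm_arc g \<alpha> v \<and> v \<subseteq> curve g \<and> closure v \<inter> Ylim g \<alpha> \<noteq> {} \<and> (\<forall>t\<in>closure v. f t > 0)"
      using adm[OF i(1)] arc_curve[OF i(1)] c1 c2 i(3) by simp
  qed
  have cov: "curve g = (\<Union>\<omega>\<in>W. closure \<omega>) \<union> (\<Union>\<gamma>\<in>G. closure \<gamma>) \<union> (\<Union>v\<in>V. closure v)"
  proof -
    have e: "(\<Union>\<omega>\<in>W. closure \<omega>) \<union> (\<Union>\<gamma>\<in>G. closure \<gamma>) \<union> (\<Union>v\<in>V. closure v) = (\<Union>i<N. closure (arc i))"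
    proof -
      have "(\<Union>\<omega>\<in>W. closure \<omega>) \<union> (\<Union>\<gamma>\<in>G. closure \<gamma>) \<union> (\<Union>v\<in>V. closure v) = (\<Union>x\<in>W \<union> G \<union> V. closure x)"
        by (simp add: UN_Un)
      also have "\<dots> = (\<Union>i<N. closure (arc i))" unfolding U by (simp add: image_image)
      finally show ?thesis .
    qed
    have "(\<Union>i<N. closure (arc i)) = curve g"
    proof
      show "(\<Union>i<N. closure (arc i)) \<subseteq> curve g"
      proof (rule UN_least)
        fix i assume i: "i \<in> {..<N}"
        have "{p i..p (Suc i)} \<subseteq> {0..1}" using p01[of i] p01[of "Suc i"] i by auto
        then show "closure (arc i) \<subseteq> curve g" unfolding clo[of i, OF i[simplified]] cur[symmetric]
          by (rule image_mono)
      qed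
      show "curve g \<subseteq> (\<Union>i<N. closure (arc i))"
      proof
        fix t assume "t \<in> curve g"
        then have "t \<in> \<phi> ` {0..1}" using cur by simp
        then obtain s where s: "s \<in> {0..1}" "t = \<phi> s" by (rule imageE) auto
        have "\<forall>i<N. p i \<le> p (Suc i)" using pmono by (simp add: less_imp_le)
        then obtain i where i: "i < N" "p i \<le> s" "s \<le> p (Suc i)"
          using cover_int[OF Npos, of p s] s p0 pN by auto
        then have "t \<in> closure (arc i)" unfolding clo[OF i(1)] s(2) by auto
        then show "t \<in> (\<Union>i<N. closure (arc i))" using i(1) by auto
      qed
    qed
    then show ?thesis using e by simp
  qed
  show ?thesis
    by (rule exI[of _ W], rule exI[of _ G], rule exI[of _ V]) (use fin WG pw Wp Gp Vp cov in blast)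
qed

end


theorem lemma2p5:
  fixes g :: "real \<Rightarrow> complex" and \<alpha> :: "complex \<Rightarrow> complex"
  assumes "smooth_jordan_param g"
    and "\<exists>\<beta>. homeomorphism (curve g) (curve g) \<alpha> \<beta>"
    and "\<exists>\<tau>. is_periodic_point (curve g) \<alpha> \<tau>"
  shows
   "(finite (Ybd g \<alpha>) \<longrightarrow>
      Phi g \<alpha> = {} \<or>
      (\<exists>W G. finite W \<and> finite G \<and> W \<inter> G = {} \<and> pairwise disjnt (W \<union> G) \<and>
         (\<forall>\<omega>\<in>W. adm_arc g \<alpha> \<omega> \<and> \<omega> \<subseteq> curve g - Phi g \<alpha>) \<and>
         (\<forall>\<gamma>\<in>G. adm_arc g \<alpha> \<gamma> \<and> \<gamma> \<subseteq> Phi g \<alpha> - Lam g \<alpha>) \<and>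
         curve g = (\<Union>\<omega>\<in>W. closure \<omega>) \<union> (\<Union>\<gamma>\<in>G. closure \<gamma>)))
    \<and>
    (\<forall>f :: complex \<Rightarrow> real. continuous_on (curve g) f \<longrightarrow> infinite (Ybd g \<alpha>) \<longrightarrow>
      (\<forall>\<tau>\<in>Ylim g \<alpha>. f \<tau> > 0) \<longrightarrow>
      (\<exists>W G V. finite W \<and> finite G \<and> finite V \<and>
         W \<inter> G = {} \<and> W \<inter> V = {} \<and> G \<inter> V = {} \<and> pairwise disjnt (W \<union> G \<union> V) \<and>
         (\<forall>\<omega>\<in>W. adm_arc g \<alpha> \<omega> \<and> \<omega> \<subseteq> curve g - Phi g \<alpha>) \<and>
         (\<forall>\<gamma>\<in>G. adm_arc g \<alpha> \<gamma> \<and> \<gamma> \<subseteq> Phi g \<alpha> - Lam g \<alpha>) \<and>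
         (\<forall>v\<in>V. adm_arc g \<alpha> v \<and> v \<subseteq> curve g \<and> closure v \<inter> Ylim g \<alpha> \<noteq> {} \<and>
                 (\<forall>t\<in>closure v. f t > 0)) \<and>
         curve g = (\<Union>\<omega>\<in>W. closure \<omega>) \<union> (\<Union>\<gamma>\<in>G. closure \<gamma>) \<union> (\<Union>v\<in>V. closure v)))"
proof -
  have sj: "smooth_jordan_param g" by (rule assms(1))
  obtain \<beta> where hom: "homeomorphism (curve g) (curve g) \<alpha> \<beta>" using assms(2) by blast
  have partA: "finite (Ybd g \<alpha>) \<longrightarrow>
      Phi g \<alpha> = {} \<or>
      (\<exists>W G. finite W \<and> finite G \<and> W \<inter> G = {} \<and> pairwise disjnt (W \<union> G) \<and>
         (\<forall>\<omega>\<in>W. adm_arc g \<alpha> \<omega> \<and> \<omega> \<subseteq> curve g - Phi g \<alpha>) \<and>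
         (\<forall>\<gamma>\<in>G. adm_arc g \<alpha> \<gamma> \<and> \<gamma> \<subseteq> Phi g \<alpha> - Lam g \<alpha>) \<and>
         curve g = (\<Union>\<omega>\<in>W. closure \<omega>) \<union> (\<Union>\<gamma>\<in>G. closure \<gamma>))"
  proof
    assume fin: "finite (Ybd g \<alpha>)"
    show "Phi g \<alpha> = {} \<or>
      (\<exists>W G. finite W \<and> finite G \<and> W \<inter> G = {} \<and> pairwise disjnt (W \<union> G) \<and>
         (\<forall>\<omega>\<in>W. adm_arc g \<alpha> \<omega> \<and> \<omega> \<subseteq> curve g - Phi g \<alpha>) \<and>
         (\<forall>\<gamma>\<in>G. adm_arc g \<alpha> \<gamma> \<and> \<gamma> \<subseteq> Phi g \<alpha> - Lam g \<alpha>) \<and>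
         curve g = (\<Union>\<omega>\<in>W. closure \<omega>) \<union> (\<Union>\<gamma>\<in>G. closure \<gamma>))"
    proof (cases "Phi g \<alpha> = {}")
      case True then show ?thesis by simp
    next
      case False
      have Lne: "Lam g \<alpha> \<noteq> {}" by (rule Lam_ne[OF sj hom assms(3)])
      have Yne: "Ybd g \<alpha> \<noteq> {}"
      proof
        assume Y0: "Ybd g \<alpha> = {}"
        have LP: "Lam g \<alpha> \<inter> Phi g \<alpha> = {}" using Y0 unfolding Ybd_def .
        have cP: "closure (Phi g \<alpha>) = Phi g \<alpha>" unfolding Phi_def by simp
        have cL: "closure (Lam g \<alpha>) = Lam g \<alpha>" using Lam_closed[OF sj hom] by (simp add: closure_closed)
        have s1: "Lam g \<alpha> \<inter> closure (Phi g \<alpha>) = {}" using LP cP by simp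
        have s2: "Phi g \<alpha> \<inter> closure (Lam g \<alpha>) = {}" using LP cL by (simp add: Int_commute)
        have "curve g \<subseteq> Lam g \<alpha> \<or> curve g \<subseteq> Phi g \<alpha>"
          by (rule sep_conn[OF connected_curve[OF sj] cover_LP[OF sj hom] s1 s2])
        moreover have "Phi g \<alpha> \<subseteq> curve g" by (rule Phi_sub[OF sj hom])
        moreover have "Lam g \<alpha> \<subseteq> curve g" unfolding Lam_def by auto
        ultimately consider "Phi g \<alpha> \<subseteq> Lam g \<alpha>" | "Lam g \<alpha> \<subseteq> Phi g \<alpha>" by auto
        then show False
        proof cases
          case 1 then have "Phi g \<alpha> \<subseteq> Lam g \<alpha> \<inter> Phi g \<alpha>" by auto
          then show False using LP False by simp
        next
          case 2 then have "Lam g \<alpha> \<subseteq> Lam g \<alpha> \<inter> Phi g \<alpha>" by auto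
          then show False using LP Lne by simp
        qed
      qed
      then obtain y0 where y0: "y0 \<in> Ybd g \<alpha>" by blast
      have nolim: "Ylim g \<alpha> = {}" unfolding Ylim_def using islimpt_finite[OF fin] by simp
      have ex: "\<exists>W G V. finite W \<and> finite G \<and> finite V \<and>
         W \<inter> G = {} \<and> W \<inter> V = {} \<and> G \<inter> V = {} \<and> pairwise disjnt (W \<union> G \<union> V) \<and>
         (\<forall>\<omega>\<in>W. adm_arc g \<alpha> \<omega> \<and> \<omega> \<subseteq> curve g - Phi g \<alpha>) \<and>
         (\<forall>\<gamma>\<in>G. adm_arc g \<alpha> \<gamma> \<and> \<gamma> \<subseteq> Phi g \<alpha> - Lam g \<alpha>) \<and>
         (\<forall>v\<in>V. adm_arc g \<alpha> v \<and> v \<subseteq> curve g \<and> closure v \<inter> Ylim g \<alpha> \<noteq> {} \<and>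
                 (\<forall>t\<in>closure v. (\<lambda>_. 1::real) t > 0)) \<and>
         curve g = (\<Union>\<omega>\<in>W. closure \<omega>) \<union> (\<Union>\<gamma>\<in>G. closure \<gamma>) \<union> (\<Union>v\<in>V. closure v)"
        by (rule decomp[OF sj hom y0 continuous_on_const]) simp
      then obtain W G V where c: "finite W \<and> finite G \<and> finite V \<and>
         W \<inter> G = {} \<and> W \<inter> V = {} \<and> G \<inter> V = {} \<and> pairwise disjnt (W \<union> G \<union> V) \<and>
         (\<forall>\<omega>\<in>W. adm_arc g \<alpha> \<omega> \<and> \<omega> \<subseteq> curve g - Phi g \<alpha>) \<and>
         (\<forall>\<gamma>\<in>G. adm_arc g \<alpha> \<gamma> \<and> \<gamma> \<subseteq> Phi g \<alpha> - Lam g \<alpha>) \<and>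
         (\<forall>v\<in>V. adm_arc g \<alpha> v \<and> v \<subseteq> curve g \<and> closure v \<inter> Ylim g \<alpha> \<noteq> {} \<and>
                 (\<forall>t\<in>closure v. (\<lambda>_. 1::real) t > 0)) \<and>
         curve g = (\<Union>\<omega>\<in>W. closure \<omega>) \<union> (\<Union>\<gamma>\<in>G. closure \<gamma>) \<union> (\<Union>v\<in>V. closure v)"
        by (elim exE)
      note WGV = c[THEN conjunct2, THEN conjunct2, THEN conjunct2, THEN conjunct2, THEN conjunct2, THEN conjunct2, THEN conjunct2, THEN conjunct2, THEN conjunct2, THEN conjunct1]
      have V0: "V = {}"
      proof (rule equals0I)
        fix v assume "v \<in> V"
        then have "closure v \<inter> Ylim g \<alpha> \<noteq> {}" using WGV by blast
        then show False using nolim by simp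
      qed
      from c have d1: "finite W" by (elim conjE) assumption
      from c have d2: "finite G" by (elim conjE) assumption
      from c have d3: "W \<inter> G = {}" by (elim conjE) assumption
      from c have d4: "pairwise disjnt (W \<union> G \<union> V)" by (elim conjE) assumption
      from c have d5: "\<forall>\<omega>\<in>W. adm_arc g \<alpha> \<omega> \<and> \<omega> \<subseteq> curve g - Phi g \<alpha>" by (elim conjE) assumption
      from c have d6: "\<forall>\<gamma>\<in>G. adm_arc g \<alpha> \<gamma> \<and> \<gamma> \<subseteq> Phi g \<alpha> - Lam g \<alpha>" by (elim conjE) assumption
      from c have d7: "curve g = (\<Union>\<omega>\<in>W. closure \<omega>) \<union> (\<Union>\<gamma>\<in>G. closure \<gamma>) \<union> (\<Union>v\<in>V. closure v)"
        by (elim conjE) assumption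
      have d4': "pairwise disjnt (W \<union> G)" using d4 unfolding V0 by simp
      have d7': "curve g = (\<Union>\<omega>\<in>W. closure \<omega>) \<union> (\<Union>\<gamma>\<in>G. closure \<gamma>)" using d7 unfolding V0 by simp
      have "finite W \<and> finite G \<and> W \<inter> G = {} \<and> pairwise disjnt (W \<union> G) \<and>
         (\<forall>\<omega>\<in>W. adm_arc g \<alpha> \<omega> \<and> \<omega> \<subseteq> curve g - Phi g \<alpha>) \<and>
         (\<forall>\<gamma>\<in>G. adm_arc g \<alpha> \<gamma> \<and> \<gamma> \<subseteq> Phi g \<alpha> - Lam g \<alpha>) \<and>
         curve g = (\<Union>\<omega>\<in>W. closure \<omega>) \<union> (\<Union>\<gamma>\<in>G. closure \<gamma>)"
        by (intro conjI d1 d2 d3 d4' d5 d6 d7')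
      then show ?thesis by (intro disjI2 exI)
    qed
  qed
  have partB: "\<forall>f :: complex \<Rightarrow> real. continuous_on (curve g) f \<longrightarrow> infinite (Ybd g \<alpha>) \<longrightarrow>
      (\<forall>\<tau>\<in>Ylim g \<alpha>. f \<tau> > 0) \<longrightarrow>
      (\<exists>W G V. finite W \<and> finite G \<and> finite V \<and>
         W \<inter> G = {} \<and> W \<inter> V = {} \<and> G \<inter> V = {} \<and> pairwise disjnt (W \<union> G \<union> V) \<and>
         (\<forall>\<omega>\<in>W. adm_arc g \<alpha> \<omega> \<and> \<omega> \<subseteq> curve g - Phi g \<alpha>) \<and>
         (\<forall>\<gamma>\<in>G. adm_arc g \<alpha> \<gamma> \<and> \<gamma> \<subseteq> Phi g \<alpha> - Lam g \<alpha>) \<and>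
         (\<forall>v\<in>V. adm_arc g \<alpha> v \<and> v \<subseteq> curve g \<and> closure v \<inter> Ylim g \<alpha> \<noteq> {} \<and>
                 (\<forall>t\<in>closure v. f t > 0)) \<and>
         curve g = (\<Union>\<omega>\<in>W. closure \<omega>) \<union> (\<Union>\<gamma>\<in>G. closure \<gamma>) \<union> (\<Union>v\<in>V. closure v))"
  proof (intro allI impI)
    fix f :: "complex \<Rightarrow> real"
    assume fc: "continuous_on (curve g) f" and inf: "infinite (Ybd g \<alpha>)" and fp: "\<forall>\<tau>\<in>Ylim g \<alpha>. f \<tau> > 0"
    have "Ybd g \<alpha> \<noteq> {}" using inf by auto
    then obtain y0 where y0: "y0 \<in> Ybd g \<alpha>" by blast
    show "\<exists>W G V. finite W \<and> finite G \<and> finite V \<and>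
         W \<inter> G = {} \<and> W \<inter> V = {} \<and> G \<inter> V = {} \<and> pairwise disjnt (W \<union> G \<union> V) \<and>
         (\<forall>\<omega>\<in>W. adm_arc g \<alpha> \<omega> \<and> \<omega> \<subseteq> curve g - Phi g \<alpha>) \<and>
         (\<forall>\<gamma>\<in>G. adm_arc g \<alpha> \<gamma> \<and> \<gamma> \<subseteq> Phi g \<alpha> - Lam g \<alpha>) \<and>
         (\<forall>v\<in>V. adm_arc g \<alpha> v \<and> v \<subseteq> curve g \<and> closure v \<inter> Ylim g \<alpha> \<noteq> {} \<and>
                 (\<forall>t\<in>closure v. f t > 0)) \<and>
         curve g = (\<Union>\<omega>\<in>W. closure \<omega>) \<union> (\<Union>\<gamma>\<in>G. closure \<gamma>) \<union> (\<Union>v\<in>V. closure v)"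
      by (rule decomp[OF sj hom y0 fc fp])
  qed
  show ?thesis by (rule conjI[OF partA partB])
qed


end
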